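(* Let $G$ be a finite group with $Z(G)=1$, let $H\subseteq G$ be an abelian subgroup, let $\omega$ be a 2-cocycle on $\widehat H$, and let $A=(kG)^J$ where $J=\sum_{\alpha,\beta\in\widehat H}\omega(\alpha,\beta)e_\alpha\otimes e_\beta$. Let $\eta\in\widehat G=G(A^* )$. Then $\eta\in G(A^* )\cap Z(A^* )$ if and only if the restriction $\eta|_H\in\widehat H$ is $\omega$-regular, i.e. $\omega(\chi,\eta|_H)=\omega(\eta|_H,\chi)$ for all $\chi\in\widehat H$. If moreover $\omega$ is non-degenerate, then $\eta\in G(A^* )\cap Z(A^* )$ if and only if $\eta|_H=1$.
   Context: $k$ is an algebraically closed field of characteristic zero. A twist in a finite dimensional Hopf algebra $A$ is an invertible $J\in A\otimes A$ with $(\Delta\otimes \mathrm{id})(J)(J\otimes 1)=(\mathrm{id}\otimes\Delta)(J)(1\otimes J)$ and $(\epsilon\otimes\mathrm{id})(J)=(\mathrm{id}\otimes\epsilon)(J)=1$; $A^J$ denotes the Hopf algebra with the same algebra structure and counit as $A$, comultiplication $\Delta^J(h)=J^{-1}\Delta(h)J$, and antipode $S^J(h)=v^{-1}S(h)v$, $v=m(S\otimes\mathrm{id})(J)$. For an abelian subgroup $H$ of a finite group $G$, $\widehat H$ is its group of characters $H\to k^*$, and for $\chi\in\widehat H$, $e_\chi=\frac{1}{|H|}\sum_{h\in H}\chi(h^{-1})h\in kH\subseteq kG$. For a 2-cocycle $\omega:\widehat H\times\widehat H\to k^*$, $J=\sum_{\alpha,\beta\in\widehat H}\omega(\alpha,\beta)e_\alpha\otimes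 e_\beta$ is a twist in $kG$ (the twist lifted from $H$ associated with $\omega$). An element $\chi\in\widehat H$ is $\omega$-regular if $\omega(\chi,\psi)=\omega(\psi,\chi)$ for all $\psi\in\widehat H$; $\omega$ is non-degenerate if the trivial character is the only $\omega$-regular element. For $A=(kG)^J$, $G(A^* )$ (group-likes of the dual) equals $\widehat G$, the group of linear characters $G\to k^*$; $Z(\cdot)$ denotes the center. *)

theory Defs
  imports "HOL-Algebra.Group" "HOL-Computational_Algebra.Polynomial"
begin

text \<open>The group algebra kG is represented by coefficient functions 'g => 'k (only values on
  carrier G matter); kG (x) kG = k[G x G] by functions 'g * 'g => 'k.
  Characters of an abelian subgroup H are represented extensionally (value 0 off H).\<close>

definition center_grp :: "('g, 'b) monoid_scheme \<Rightarrow> 'g set" where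
  "center_grp G = {z \<in> carrier G. \<forall>g \<in> carrier G. z \<otimes>\<^bsub>G\<^esub> g = g \<otimes>\<^bsub>G\<^esub> z}"

definition characters :: "('g, 'b) monoid_scheme \<Rightarrow> 'g set \<Rightarrow> ('g \<Rightarrow> 'k::field) set" where
  "characters G H = {\<chi>. (\<forall>x\<in>H. \<forall>y\<in>H. \<chi> (x \<otimes>\<^bsub>G\<^esub> y) = \<chi> x * \<chi> y)
                         \<and> (\<forall>x\<in>H. \<chi> x \<noteq> 0) \<and> (\<forall>x. x \<notin> H \<longrightarrow> \<chi> x = 0)}"

definition char_mult :: "'g set \<Rightarrow> ('g \<Rightarrow> 'k::field) \<Rightarrow> ('g \<Rightarrow> 'k) \<Rightarrow> ('g \<Rightarrow> 'k)" where
  "char_mult H \<alpha> \<beta> = (\<lambda>x. if x \<in> H then \<alpha> x * \<beta> x else 0)"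

definition char_one :: "'g set \<Rightarrow> ('g \<Rightarrow> 'k::field)" where
  "char_one H = (\<lambda>x. if x \<in> H then 1 else 0)"

definition restrict_char :: "'g set \<Rightarrow> ('g \<Rightarrow> 'k::field) \<Rightarrow> ('g \<Rightarrow> 'k)" where
  "restrict_char H \<eta> = (\<lambda>x. if x \<in> H then \<eta> x else 0)"

definition two_cocycle :: "('g, 'b) monoid_scheme \<Rightarrow> 'g set
    \<Rightarrow> (('g \<Rightarrow> 'k::field) \<Rightarrow> ('g \<Rightarrow> 'k) \<Rightarrow> 'k) \<Rightarrow> bool" where
  "two_cocycle G H \<omega> \<longleftrightarrow>
     (\<forall>\<alpha>\<in>characters G H. \<forall>\<beta>\<in>characters G H. \<omega> \<alpha> \<beta> \<noteq> 0) \<and>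
     (\<forall>\<alpha>\<in>characters G H. \<forall>\<beta>\<in>characters G H. \<forall>\<gamma>\<in>characters G H.
        \<omega> \<alpha> \<beta> * \<omega> (char_mult H \<alpha> \<beta>) \<gamma> = \<omega> \<alpha> (char_mult H \<beta> \<gamma>) * \<omega> \<beta> \<gamma>) \<and>
     (\<forall>\<alpha>\<in>characters G H. \<omega> (char_one H) \<alpha> = 1 \<and> \<omega> \<alpha> (char_one H) = 1)"

definition omega_regular :: "('g, 'b) monoid_scheme \<Rightarrow> 'g set
    \<Rightarrow> (('g \<Rightarrow> 'k::field) \<Rightarrow> ('g \<Rightarrow> 'k) \<Rightarrow> 'k) \<Rightarrow> ('g \<Rightarrow> 'k) \<Rightarrow> bool" where
  "omega_regular G H \<omega> \<chi> \<longleftrightarrow> (\<forall>\<psi>\<in>characters G H. \<omega> \<chi> \<psi> = \<omega> \<psi> \<chi>)"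

definition non_degenerate :: "('g, 'b) monoid_scheme \<Rightarrow> 'g set
    \<Rightarrow> (('g \<Rightarrow> 'k::field) \<Rightarrow> ('g \<Rightarrow> 'k) \<Rightarrow> 'k) \<Rightarrow> bool" where
  "non_degenerate G H \<omega> \<longleftrightarrow>
     (\<forall>\<chi>\<in>characters G H. omega_regular G H \<omega> \<chi> \<longrightarrow> \<chi> = char_one H)"

text \<open>Idempotent e_chi = 1/|H| sum_{h in H} chi(h^{-1}) h in kG.\<close>
definition idem :: "('g, 'b) monoid_scheme \<Rightarrow> 'g set \<Rightarrow> ('g \<Rightarrow> 'k::field) \<Rightarrow> ('g \<Rightarrow> 'k)" where
  "idem G H \<chi> = (\<lambda>g. if g \<in> H then \<chi> (inv\<^bsub>G\<^esub> g) / of_nat (card H) else 0)"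

definition tmult :: "('g, 'b) monoid_scheme \<Rightarrow> ('g \<times> 'g \<Rightarrow> 'k::field) \<Rightarrow> ('g \<times> 'g \<Rightarrow> 'k)
    \<Rightarrow> ('g \<times> 'g \<Rightarrow> 'k)" where
  "tmult G x y = (\<lambda>(a, b). if a \<in> carrier G \<and> b \<in> carrier G then
      (\<Sum>(c, d)\<in>carrier G \<times> carrier G.
          x (c, d) * y (inv\<^bsub>G\<^esub> c \<otimes>\<^bsub>G\<^esub> a, inv\<^bsub>G\<^esub> d \<otimes>\<^bsub>G\<^esub> b)) else 0)"

definition tone :: "('g, 'b) monoid_scheme \<Rightarrow> ('g \<times> 'g \<Rightarrow> 'k::field)" where
  "tone G = (\<lambda>(a, b). if a = \<one>\<^bsub>G\<^esub> \<and> b = \<one>\<^bsub>G\<^esub> then 1 else 0)"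

definition tinv :: "('g, 'b) monoid_scheme \<Rightarrow> ('g \<times> 'g \<Rightarrow> 'k::field) \<Rightarrow> ('g \<times> 'g \<Rightarrow> 'k)" where
  "tinv G x = (THE y. (\<forall>p. p \<notin> carrier G \<times> carrier G \<longrightarrow> y p = 0)
                     \<and> tmult G x y = tone G \<and> tmult G y x = tone G)"

definition tensor :: "('g \<Rightarrow> 'k::field) \<Rightarrow> ('g \<Rightarrow> 'k) \<Rightarrow> ('g \<times> 'g \<Rightarrow> 'k)" where
  "tensor x y = (\<lambda>(a, b). x a * y b)"

definition comult :: "('g, 'b) monoid_scheme \<Rightarrow> ('g \<Rightarrow> 'k::field) \<Rightarrow> ('g \<times> 'g \<Rightarrow> 'k)" where
  "comult G x = (\<lambda>(a, b). if a = b \<and> a \<in> carrier G then x a else 0)"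

definition twistJ :: "('g, 'b) monoid_scheme \<Rightarrow> 'g set
    \<Rightarrow> (('g \<Rightarrow> 'k::field) \<Rightarrow> ('g \<Rightarrow> 'k) \<Rightarrow> 'k) \<Rightarrow> ('g \<times> 'g \<Rightarrow> 'k)" where
  "twistJ G H \<omega> = (\<lambda>p. \<Sum>\<alpha>\<in>characters G H. \<Sum>\<beta>\<in>characters G H.
       \<omega> \<alpha> \<beta> * tensor (idem G H \<alpha>) (idem G H \<beta>) p)"

definition comultJ :: "('g, 'b) monoid_scheme \<Rightarrow> 'g set
    \<Rightarrow> (('g \<Rightarrow> 'k::field) \<Rightarrow> ('g \<Rightarrow> 'k) \<Rightarrow> 'k) \<Rightarrow> ('g \<Rightarrow> 'k) \<Rightarrow> ('g \<times> 'g \<Rightarrow> 'k)" where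
  "comultJ G H \<omega> x = tmult G (tmult G (tinv G (twistJ G H \<omega>)) (comult G x)) (twistJ G H \<omega>)"

definition basis_el :: "'g \<Rightarrow> ('g \<Rightarrow> 'k::field)" where
  "basis_el g = (\<lambda>x. if x = g then 1 else 0)"

text \<open>A^* = linear functionals on kG, given by their values on the basis G; the
  product of A^* is dual to Delta^J: (f g)(x) = (f (x) g)(Delta^J(x)).\<close>
definition dual_mult :: "('g, 'b) monoid_scheme \<Rightarrow> 'g set
    \<Rightarrow> (('g \<Rightarrow> 'k::field) \<Rightarrow> ('g \<Rightarrow> 'k) \<Rightarrow> 'k) \<Rightarrow> ('g \<Rightarrow> 'k) \<Rightarrow> ('g \<Rightarrow> 'k) \<Rightarrow> ('g \<Rightarrow> 'k)" where
  "dual_mult G H \<omega> f g = (\<lambda>x. if x \<in> carrier G then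
      (\<Sum>(a, b)\<in>carrier G \<times> carrier G. comultJ G H \<omega> (basis_el x) (a, b) * f a * g b) else 0)"

definition in_dual_center :: "('g, 'b) monoid_scheme \<Rightarrow> 'g set
    \<Rightarrow> (('g \<Rightarrow> 'k::field) \<Rightarrow> ('g \<Rightarrow> 'k) \<Rightarrow> 'k) \<Rightarrow> ('g \<Rightarrow> 'k) \<Rightarrow> bool" where
  "in_dual_center G H \<omega> \<eta> \<longleftrightarrow> (\<forall>f. dual_mult G H \<omega> \<eta> f = dual_mult G H \<omega> f \<eta>)"

text \<open>Linear characters of G (= G(A^*)), extended by 0 off carrier G.\<close>
definition lin_chars :: "('g, 'b) monoid_scheme \<Rightarrow> ('g \<Rightarrow> 'k::field) set" where
  "lin_chars G = characters G (carrier G)"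

end

theory Submission
  imports Defs "HOL-Algebra.Multiplicative_Group"
begin

definition char_inv :: "'a set \<Rightarrow> ('a \<Rightarrow> 'k::field) \<Rightarrow> ('a \<Rightarrow> 'k)" where
  "char_inv K \<chi> = (\<lambda>x. if x \<in> K then inverse (\<chi> x) else 0)"

context group
begin

lemma char_mult_hom: "\<chi> \<in> characters G K \<Longrightarrow> x \<in> K \<Longrightarrow> y \<in> K \<Longrightarrow> \<chi> (x \<otimes> y) = \<chi> x * \<chi> y"
  by (simp add: characters_def)

lemma char_nz: "\<chi> \<in> characters G K \<Longrightarrow> x \<in> K \<Longrightarrow> \<chi> x \<noteq> 0"
  by (simp add: characters_def)

lemma char_out: "\<chi> \<in> characters G K \<Longrightarrow> x \<notin> K \<Longrightarrow> \<chi> x = 0"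
  by (simp add: characters_def)

lemma char_one_val:
  assumes "subgroup K G" "\<chi> \<in> characters G K"
  shows "\<chi> \<one> = 1"
proof -
  have o: "\<one> \<in> K" by (rule subgroup.one_closed[OF assms(1)])
  have "\<chi> \<one> = \<chi> \<one> * \<chi> \<one>" using char_mult_hom[OF assms(2) o o] by simp
  moreover have "\<chi> \<one> \<noteq> 0" using char_nz[OF assms(2) o] .
  ultimately show ?thesis by (metis mult_cancel_left1)
qed

lemma char_inv_val:
  assumes "subgroup K G" "\<chi> \<in> characters G K" "x \<in> K"
  shows "\<chi> (inv x) = inverse (\<chi> x)"
proof -
  have i: "inv x \<in> K" by (rule subgroup.m_inv_closed[OF assms(1) assms(3)])
  have xc: "x \<in> carrier G" using subgroup.subset[OF assms(1)] assms(3) by blast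
  have "\<chi> x * \<chi> (inv x) = 1"
    using char_mult_hom[OF assms(2) assms(3) i] char_one_val[OF assms(1,2)] xc by simp
  thus ?thesis by (metis inverse_unique)
qed

lemma sub_pow_closed:
  assumes "subgroup K G" "x \<in> K" shows "x [^] (n::nat) \<in> K"
proof (induction n)
  case 0 thus ?case using subgroup.one_closed[OF assms(1)] by simp
next
  case (Suc n)
  have "x [^] Suc n = x [^] n \<otimes> x" by simp
  thus ?case using Suc subgroup.m_closed[OF assms(1) _ assms(2)] by metis
qed

lemma char_pow:
  assumes "subgroup K G" "\<chi> \<in> characters G K" "x \<in> K"
  shows "\<chi> (x [^] (n::nat)) = \<chi> x ^ n"
proof (induction n)
  case 0 thus ?case using char_one_val[OF assms(1,2)] by simp
next
  case (Suc n)
  have "x [^] n \<in> K" by (rule sub_pow_closed[OF assms(1,3)])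
  thus ?case using Suc char_mult_hom[OF assms(2) _ assms(3)] by simp
qed

lemma char_one_in: "subgroup K G \<Longrightarrow> char_one K \<in> characters G K"
  unfolding characters_def char_one_def using subgroup.m_closed by fastforce

lemma char_mult_in:
  assumes "subgroup K G" "\<alpha> \<in> characters G K" "\<beta> \<in> characters G K"
  shows "char_mult K \<alpha> \<beta> \<in> characters G K"
proof -
  have "\<forall>x\<in>K. \<forall>y\<in>K. x \<otimes> y \<in> K" using subgroup.m_closed[OF assms(1)] by blast
  thus ?thesis using assms(2,3) unfolding characters_def char_mult_def by auto
qed


lemma char_inv_in:
  assumes "subgroup K G" "\<alpha> \<in> characters G K"
  shows "char_inv K \<alpha> \<in> characters G K"
proof -
  have "\<forall>x\<in>K. \<forall>y\<in>K. x \<otimes> y \<in> K" using subgroup.m_closed[OF assms(1)] by blast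
  thus ?thesis using assms(2) unfolding characters_def char_inv_def by (auto simp: field_simps)
qed

lemma char_mult_inv:
  assumes "\<alpha> \<in> characters G K"
  shows "char_mult K (char_inv K \<alpha>) \<alpha> = char_one K"
  using assms unfolding characters_def char_inv_def char_mult_def char_one_def by auto

lemma char_mult_comm: "char_mult K \<alpha> \<beta> = char_mult K \<beta> \<alpha>"
  unfolding char_mult_def by (auto simp: mult.commute)

lemma char_mult_assoc: "char_mult K (char_mult K \<alpha> \<beta>) \<gamma> = char_mult K \<alpha> (char_mult K \<beta> \<gamma>)"
  unfolding char_mult_def by (auto simp: mult.assoc)

lemma char_mult_one:
  assumes "\<alpha> \<in> characters G K"
  shows "char_mult K (char_one K) \<alpha> = \<alpha>"
  using assms unfolding characters_def char_one_def char_mult_def by auto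

lemma char_eqI:
  assumes "\<alpha> \<in> characters G K" "\<beta> \<in> characters G K" "\<And>x. x \<in> K \<Longrightarrow> \<alpha> x = \<beta> x"
  shows "\<alpha> = \<beta>"
proof (rule ext)
  fix x show "\<alpha> x = \<beta> x"
    using assms char_out[OF assms(1), of x] char_out[OF assms(2), of x] by (cases "x \<in> K") auto
qed

end


context comm_group
begin

lemma aux_cancel:
  assumes "k \<in> carrier G" "z \<in> carrier G" "y \<in> carrier G"
  shows "(inv k \<otimes> inv (z \<otimes> y) \<otimes> y) \<otimes> (k \<otimes> z) = \<one>"
proof -
  have c: "inv k \<in> carrier G" "inv (z \<otimes> y) \<in> carrier G" using assms by auto
  have "(inv k \<otimes> inv (z \<otimes> y) \<otimes> y) \<otimes> (k \<otimes> z) = (inv k \<otimes> k) \<otimes> (inv (z \<otimes> y) \<otimes> (z \<otimes> y))"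
    using assms c by (simp only: m_ac m_closed)
  also have "\<dots> = \<one>" using assms by simp
  finally show ?thesis .
qed

lemma ext_step:
  fixes \<chi> :: "'a \<Rightarrow> 'k::field"
  assumes K: "subgroup K G" and hom: "\<forall>x\<in>K. \<forall>y\<in>K. \<chi> (x \<otimes> y) = \<chi> x * \<chi> y"
    and nz: "\<forall>x\<in>K. \<chi> x \<noteq> 0"
    and g: "g \<in> carrier G" "g \<notin> K" and m: "0 < m" "g [^] m \<in> K" "\<forall>j. 0 < j \<and> j < m \<longrightarrow> g [^] j \<notin> K"
    and c: "c ^ m = \<chi> (g [^] m)"
  shows "\<exists>K' \<chi>'. subgroup K' G \<and> K \<subseteq> K' \<and> g \<in> K' \<and> (\<forall>x\<in>K'. \<forall>y\<in>K'. \<chi>' (x \<otimes> y) = \<chi>' x * \<chi>' y)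
     \<and> (\<forall>x\<in>K'. \<chi>' x \<noteq> 0) \<and> (\<forall>x\<in>K. \<chi>' x = \<chi> x) \<and> \<chi>' g = c"
proof -
  have Kc: "K \<subseteq> carrier G" using subgroup.subset[OF K] .
  have one1: "\<chi> \<one> = 1"
  proof -
    have o: "\<one> \<in> K" by (rule subgroup.one_closed[OF K])
    have "\<chi> \<one> = \<chi> \<one> * \<chi> \<one>" using hom o by (metis one_closed r_one)
    thus ?thesis using nz o by (metis mult_cancel_left1)
  qed
  define K' where "K' = {k \<otimes> g [^] i | k i. k \<in> K \<and> i < m}"
  have uniq0: "k1 = k2 \<and> i = j" if "k1 \<in> K" "k2 \<in> K" "i < m" "j < m" "i \<le> j" "k1 \<otimes> g [^] i = k2 \<otimes> g [^] j" for k1 k2 i j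
  proof -
    have k1c: "k1 \<in> carrier G" and k2c: "k2 \<in> carrier G" using that Kc by auto
    have "g [^] j = g [^] (j - i) \<otimes> g [^] i" using nat_pow_mult[OF g(1), of "j-i" i] that(5) by simp
    hence "k1 \<otimes> g [^] i = (k2 \<otimes> g [^] (j - i)) \<otimes> g [^] i" using that(6) k2c g(1) by (simp add: m_assoc)
    hence e: "k1 = k2 \<otimes> g [^] (j - i)" using k1c k2c g(1) by simp
    have "inv k2 \<otimes> k1 = g [^] (j - i)" using e k2c g(1) by (simp add: m_assoc[symmetric])
    moreover have "inv k2 \<otimes> k1 \<in> K"
      by (rule subgroup.m_closed[OF K subgroup.m_inv_closed[OF K that(2)] that(1)])
    ultimately have "g [^] (j - i) \<in> K" by simp
    hence "j - i = 0" using m(3) that(4) by (metis diff_le_self le_less_trans not_gr_zero)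
    thus ?thesis using e k2c that(5) by simp
  qed
  have uniq: "k1 = k2 \<and> i = j" if "k1 \<in> K" "k2 \<in> K" "i < m" "j < m" "k1 \<otimes> g [^] i = k2 \<otimes> g [^] j" for k1 k2 i j
  proof (cases "i \<le> j")
    case True thus ?thesis using uniq0 that by blast
  next
    case False
    hence "j \<le> i" by simp
    thus ?thesis using uniq0[of k2 k1 j i] that by metis
  qed
  define \<chi>' where "\<chi>' y = (THE v. \<exists>k i. k \<in> K \<and> i < m \<and> y = k \<otimes> g [^] i \<and> v = \<chi> k * c ^ i)" for y
  have \<chi>'_eq: "\<chi>' (k \<otimes> g [^] i) = \<chi> k * c ^ i" if "k \<in> K" "i < m" for k i
    unfolding \<chi>'_def
  proof (rule the_equality)
    show "\<exists>k' i'. k' \<in> K \<and> i' < m \<and> k \<otimes> g [^] i = k' \<otimes> g [^] i' \<and> \<chi> k * c ^ i = \<chi> k' * c ^ i'"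
      using that by blast
  next
    fix v assume "\<exists>k' i'. k' \<in> K \<and> i' < m \<and> k \<otimes> g [^] i = k' \<otimes> g [^] i' \<and> v = \<chi> k' * c ^ i'"
    then obtain k' i' where h: "k' \<in> K" "i' < m" "k \<otimes> g [^] i = k' \<otimes> g [^] i'" "v = \<chi> k' * c ^ i'" by blast
    from uniq[OF that(1) h(1) that(2) h(2) h(3)] h(4) show "v = \<chi> k * c ^ i" by simp
  qed
  have KK': "K \<subseteq> K'"
  proof
    fix k assume "k \<in> K"
    hence "k = k \<otimes> g [^] (0::nat)" "k \<in> K" using Kc by auto
    thus "k \<in> K'" unfolding K'_def using m(1) by blast
  qed
  have m1: "1 < m"
  proof (rule ccontr)
    assume "\<not> 1 < m" hence "m = 1" using m(1) by simp
    thus False using m(2) g by simp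
  qed
  have gK': "g \<in> K'"
  proof -
    have "g = \<one> \<otimes> g [^] (1::nat)" using g(1) by simp
    moreover have "\<one> \<in> K" by (rule subgroup.one_closed[OF K])
    ultimately show ?thesis unfolding K'_def using m1 by blast
  qed
  have K'c: "K' \<subseteq> carrier G" unfolding K'_def using Kc g(1) by auto
  have prod: "\<exists>k i'. k \<in> K \<and> i' < m \<and> (k1 \<otimes> g [^] i) \<otimes> (k2 \<otimes> g [^] j) = k \<otimes> g [^] i'
      \<and> \<chi> k * c ^ i' = (\<chi> k1 * c ^ i) * (\<chi> k2 * c ^ j)"
    if "k1 \<in> K" "k2 \<in> K" "i < m" "j < m" for k1 k2 i j
  proof -
    have k1c: "k1 \<in> carrier G" and k2c: "k2 \<in> carrier G" using that Kc by auto
    have k12: "k1 \<otimes> k2 \<in> K" by (rule subgroup.m_closed[OF K that(1,2)])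
    have eq0: "(k1 \<otimes> g [^] i) \<otimes> (k2 \<otimes> g [^] j) = (k1 \<otimes> k2) \<otimes> g [^] (i + j)"
      using k1c k2c g(1) by (simp add: m_ac nat_pow_mult[symmetric])
    show ?thesis
    proof (cases "i + j < m")
      case True
      have "\<chi> (k1 \<otimes> k2) * c ^ (i + j) = (\<chi> k1 * c ^ i) * (\<chi> k2 * c ^ j)"
        using hom that(1,2) by (simp add: power_add)
      thus ?thesis using eq0 True k12 by blast
    next
      case False
      have gm: "g [^] m \<in> carrier G" using g(1) by simp
      have k3: "(k1 \<otimes> k2) \<otimes> g [^] m \<in> K" by (rule subgroup.m_closed[OF K k12 m(2)])
      have "g [^] (i + j) = g [^] m \<otimes> g [^] (i + j - m)" using False nat_pow_mult[OF g(1), of m "i+j-m"] by simp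
      hence eq1: "(k1 \<otimes> g [^] i) \<otimes> (k2 \<otimes> g [^] j) = ((k1 \<otimes> k2) \<otimes> g [^] m) \<otimes> g [^] (i + j - m)"
        using eq0 k1c k2c g(1) by (simp add: m_assoc)
      have "\<chi> ((k1 \<otimes> k2) \<otimes> g [^] m) * c ^ (i + j - m) = \<chi> k1 * \<chi> k2 * (c ^ m * c ^ (i + j - m))"
        using hom that(1,2) k12 m(2) c by simp
      also have "c ^ m * c ^ (i + j - m) = c ^ (i + j)" using False by (simp add: power_add[symmetric])
      finally have "\<chi> ((k1 \<otimes> k2) \<otimes> g [^] m) * c ^ (i + j - m) = (\<chi> k1 * c ^ i) * (\<chi> k2 * c ^ j)"
        by (simp add: power_add)
      moreover have "i + j - m < m" using that(3,4) by simp
      ultimately show ?thesis using eq1 k3 by blast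
    qed
  qed
  have sub: "subgroup K' G"
  proof (rule subgroupI)
    show "K' \<subseteq> carrier G" by fact
    show "K' \<noteq> {}" using gK' by blast
  next
    fix a assume "a \<in> K'"
    then obtain k i where a: "k \<in> K" "i < m" "a = k \<otimes> g [^] i" unfolding K'_def by blast
    have kc: "k \<in> carrier G" using a Kc by auto
    show "inv a \<in> K'"
    proof (cases "i = 0")
      case True
      have "inv a = inv k \<otimes> g [^] (0::nat)" using a True kc by simp
      moreover have "inv k \<in> K" by (rule subgroup.m_inv_closed[OF K a(1)])
      ultimately show ?thesis unfolding K'_def using m(1) by blast
    next
      case False
      have ik: "inv k \<otimes> inv (g [^] m) \<in> K"
        by (rule subgroup.m_closed[OF K subgroup.m_inv_closed[OF K a(1)] subgroup.m_inv_closed[OF K m(2)]])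
      have gm: "g [^] m = g [^] i \<otimes> g [^] (m - i)" using a(2) nat_pow_mult[OF g(1), of i "m-i"] by simp
      have "(inv k \<otimes> inv (g [^] m) \<otimes> g [^] (m - i)) \<otimes> a = \<one>"
        using a(3) kc g(1) gm aux_cancel[of k "g [^] i" "g [^] (m - i)"] by simp
      hence "inv a = inv k \<otimes> inv (g [^] m) \<otimes> g [^] (m - i)"
        using a(3) kc g(1) by (intro inv_equality) auto
      moreover have "m - i < m" using False m(1) by simp
      ultimately show ?thesis unfolding K'_def using ik by blast
    qed
  next
    fix a b assume "a \<in> K'" "b \<in> K'"
    then obtain k1 i k2 j where "k1 \<in> K" "i < m" "a = k1 \<otimes> g [^] i" "k2 \<in> K" "j < m" "b = k2 \<otimes> g [^] j"
      unfolding K'_def by blast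
    thus "a \<otimes> b \<in> K'" using prod[of k1 k2 i j] unfolding K'_def by blast
  qed
  have hom': "\<forall>x\<in>K'. \<forall>y\<in>K'. \<chi>' (x \<otimes> y) = \<chi>' x * \<chi>' y"
  proof (intro ballI)
    fix a b assume "a \<in> K'" "b \<in> K'"
    then obtain k1 i k2 j where h: "k1 \<in> K" "i < m" "a = k1 \<otimes> g [^] i" "k2 \<in> K" "j < m" "b = k2 \<otimes> g [^] j"
      unfolding K'_def by blast
    obtain k i' where "k \<in> K" "i' < m" "a \<otimes> b = k \<otimes> g [^] i'" "\<chi> k * c ^ i' = (\<chi> k1 * c ^ i) * (\<chi> k2 * c ^ j)"
      using prod[OF h(1,4,2,5)] h(3,6) by blast
    thus "\<chi>' (a \<otimes> b) = \<chi>' a * \<chi>' b" using \<chi>'_eq h by simp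
  qed
  have cnz: "c \<noteq> 0"
  proof
    assume "c = 0" hence "\<chi> (g [^] m) = 0" using c m(1) by (simp add: zero_power)
    thus False using nz m(2) by blast
  qed
  have nz': "\<forall>x\<in>K'. \<chi>' x \<noteq> 0"
  proof
    fix a assume "a \<in> K'"
    then obtain k i where "k \<in> K" "i < m" "a = k \<otimes> g [^] i" unfolding K'_def by blast
    thus "\<chi>' a \<noteq> 0" using \<chi>'_eq nz cnz by simp
  qed
  have agree: "\<forall>x\<in>K. \<chi>' x = \<chi> x"
  proof
    fix k assume k: "k \<in> K"
    hence "\<chi>' (k \<otimes> g [^] (0::nat)) = \<chi> k" using \<chi>'_eq[OF k m(1)] by simp
    thus "\<chi>' k = \<chi> k" using k Kc by auto
  qed
  have "\<chi>' (\<one> \<otimes> g [^] (1::nat)) = c" using \<chi>'_eq[OF subgroup.one_closed[OF K] m1] one1 by simp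
  hence gc: "\<chi>' g = c" using g(1) by simp
  show ?thesis using sub KK' gK' hom' nz' agree gc by blast
qed


lemma exists_min_pow:
  assumes fin: "finite (carrier G)" and K: "subgroup K G" and g: "g \<in> carrier G"
  shows "\<exists>m::nat. 0 < m \<and> g [^] m \<in> K \<and> (\<forall>j::nat. 0 < j \<and> j < m \<longrightarrow> g [^] j \<notin> K)"
proof -
  have "carrier G \<noteq> {}" using g by blast
  hence o: "0 < order G" unfolding order_def using fin by (simp add: card_gt_0_iff)
  have "g [^] order G \<in> K" using pow_order_eq_1[OF g] subgroup.one_closed[OF K] by simp
  hence ex: "\<exists>m::nat. 0 < m \<and> g [^] m \<in> K" using o by blast
  define m where "m = (LEAST m::nat. 0 < m \<and> g [^] m \<in> K)"
  have "0 < m \<and> g [^] m \<in> K" unfolding m_def using LeastI_ex[OF ex] .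
  moreover have "\<forall>j. 0 < j \<and> j < m \<longrightarrow> g [^] j \<notin> K"
    unfolding m_def using not_less_Least by blast
  ultimately show ?thesis by blast
qed

lemma extend_all:
  fixes \<chi> :: "'a \<Rightarrow> 'k::alg_closed_field"
  assumes fin: "finite (carrier G)"
  shows "subgroup K G \<Longrightarrow> (\<forall>x\<in>K. \<forall>y\<in>K. \<chi> (x \<otimes> y) = \<chi> x * \<chi> y) \<Longrightarrow> (\<forall>x\<in>K. \<chi> x \<noteq> 0)
    \<Longrightarrow> \<exists>\<psi>. (\<forall>x\<in>carrier G. \<forall>y\<in>carrier G. \<psi> (x \<otimes> y) = \<psi> x * \<psi> y) \<and> (\<forall>x\<in>carrier G. \<psi> x \<noteq> 0)
         \<and> (\<forall>x\<in>K. \<psi> x = \<chi> x)"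
proof (induction "card (carrier G - K)" arbitrary: K \<chi> rule: less_induct)
  case less
  show ?case
  proof (cases "K = carrier G")
    case True then show ?thesis using less.prems by blast
  next
    case False
    then obtain g where g: "g \<in> carrier G" "g \<notin> K" using subgroup.subset[OF less.prems(1)] by blast
    obtain m :: nat where m: "0 < m" "g [^] m \<in> K" "\<forall>j::nat. 0 < j \<and> j < m \<longrightarrow> g [^] j \<notin> K"
      using exists_min_pow[OF fin less.prems(1) g(1)] by blast
    obtain c where c: "c ^ m = \<chi> (g [^] m)" using nth_root_exists[OF m(1)] by blast
    obtain K' \<chi>' where K': "subgroup K' G" "K \<subseteq> K'" "g \<in> K'" "\<forall>x\<in>K'. \<forall>y\<in>K'. \<chi>' (x \<otimes> y) = \<chi>' x * \<chi>' y"
      "\<forall>x\<in>K'. \<chi>' x \<noteq> 0" "\<forall>x\<in>K. \<chi>' x = \<chi> x"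
      using ext_step[OF less.prems(1) less.prems(2) less.prems(3) g m c] by blast
    have "carrier G - K' \<subset> carrier G - K" using K'(2,3) g by blast
    hence "card (carrier G - K') < card (carrier G - K)" using fin by (intro psubset_card_mono) auto
    then obtain \<psi> where "(\<forall>x\<in>carrier G. \<forall>y\<in>carrier G. \<psi> (x \<otimes> y) = \<psi> x * \<psi> y)" "(\<forall>x\<in>carrier G. \<psi> x \<noteq> 0)"
         "(\<forall>x\<in>K'. \<psi> x = \<chi>' x)"
      using less.hyps[OF _ K'(1) K'(4) K'(5)] by blast
    moreover have "\<forall>x\<in>K. \<psi> x = \<chi> x" using K'(2,6) \<open>\<forall>x\<in>K'. \<psi> x = \<chi>' x\<close> by auto
    ultimately show ?thesis by blast
  qed
qed

lemma sep_char:
  assumes fin: "finite (carrier G)" and h: "h \<in> carrier G" "h \<noteq> \<one>"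
  shows "\<exists>\<chi>\<in>characters G (carrier G). \<chi> h \<noteq> (1::'k::{alg_closed_field,field_char_0})"
proof -
  have K: "subgroup {\<one>} G" by (rule triv_subgroup)
  have hK: "h \<notin> {\<one>}" using h by simp
  obtain m :: nat where m: "0 < m" "h [^] m \<in> {\<one>}" "\<forall>j::nat. 0 < j \<and> j < m \<longrightarrow> h [^] j \<notin> {\<one>}"
    using exists_min_pow[OF fin K h(1)] by blast
  have m1: "1 < m"
  proof (rule ccontr)
    assume "\<not> 1 < m" hence "m = 1" using m(1) by simp
    thus False using m(2) h by simp
  qed
  define f :: "nat \<Rightarrow> 'k" where "f = (\<lambda>_. 1)"
  obtain c :: 'k where c0: "(\<Sum>k\<le>m-1. f k * c ^ k) = 0"
    using alg_closed[of "m-1" f] m1 unfolding f_def by auto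
  have at: "{..m-1} = {..<m}" using m1 by auto
  have c1: "(\<Sum>k<m. c ^ k) = 0" using c0 at unfolding f_def by simp
  have cm: "c ^ m = 1" using one_diff_power_eq[of c m] c1 by simp
  have cne: "c \<noteq> 1"
  proof
    assume "c = 1" hence "(\<Sum>k<m. c ^ k) = of_nat m" by simp
    thus False using c1 m1 by simp
  qed
  define \<chi>0 :: "'a \<Rightarrow> 'k" where "\<chi>0 = (\<lambda>_. 1)"
  have cc: "c ^ m = \<chi>0 (h [^] m)" using cm unfolding \<chi>0_def by simp
  have h1: "\<forall>x\<in>{\<one>}. \<forall>y\<in>{\<one>}. \<chi>0 (x \<otimes> y) = \<chi>0 x * \<chi>0 y" unfolding \<chi>0_def by simp
  have h2: "\<forall>x\<in>{\<one>}. \<chi>0 x \<noteq> 0" unfolding \<chi>0_def by simp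
  from ext_step[OF K h1 h2 h(1) hK m cc]
  obtain K' \<chi>' where K': "subgroup K' G" "\<forall>x\<in>K'. \<forall>y\<in>K'. \<chi>' (x \<otimes> y) = \<chi>' x * \<chi>' y"
      "\<forall>x\<in>K'. \<chi>' x \<noteq> 0" "h \<in> K'" "\<chi>' h = c"
    unfolding \<chi>0_def by auto
  obtain \<psi> where psi: "(\<forall>x\<in>carrier G. \<forall>y\<in>carrier G. \<psi> (x \<otimes> y) = \<psi> x * \<psi> y)" "(\<forall>x\<in>carrier G. \<psi> x \<noteq> 0)"
         "(\<forall>x\<in>K'. \<psi> x = \<chi>' x)"
    using extend_all[OF fin K'(1) K'(2) K'(3)] by blast
  define \<chi> where "\<chi> = (\<lambda>x. if x \<in> carrier G then \<psi> x else 0)"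
  have "\<chi> \<in> characters G (carrier G)" using psi(1,2) unfolding characters_def \<chi>_def by auto
  moreover have "\<chi> h = c" using psi(3) K'(4,5) h(1) unfolding \<chi>_def by simp
  hence "\<chi> h \<noteq> 1" using cne by simp
  ultimately show ?thesis by blast
qed


lemma bij_cmult: "a \<in> carrier G \<Longrightarrow> bij_betw (\<lambda>x. a \<otimes> x) (carrier G) (carrier G)"
proof (rule bij_betw_byWitness[where f'="\<lambda>x. inv a \<otimes> x"])
  assume a: "a \<in> carrier G"
  show "\<forall>x\<in>carrier G. inv a \<otimes> (a \<otimes> x) = x" using a by (simp add: m_assoc[symmetric])
  show "\<forall>x\<in>carrier G. a \<otimes> (inv a \<otimes> x) = x" using a by (simp add: m_assoc[symmetric])
  show "(\<lambda>x. a \<otimes> x) ` carrier G \<subseteq> carrier G" using a by auto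
  show "(\<lambda>x. inv a \<otimes> x) ` carrier G \<subseteq> carrier G" using a by auto
qed

lemma char_sum_elems:
  fixes \<chi> :: "'a \<Rightarrow> 'k::field"
  assumes "\<chi> \<in> characters G (carrier G)"
  shows "(\<Sum>x\<in>carrier G. \<chi> x) = (if \<chi> = char_one (carrier G) then of_nat (card (carrier G)) else 0)"
proof (cases "\<chi> = char_one (carrier G)")
  case True thus ?thesis by (simp add: char_one_def)
next
  case False
  have sub: "subgroup (carrier G) G" by (rule subgroup_self)
  obtain a where a: "a \<in> carrier G" "\<chi> a \<noteq> 1"
  proof (rule ccontr)
    assume "\<not> thesis"
    hence "\<forall>x\<in>carrier G. \<chi> x = 1" using that by blast
    hence "\<chi> = char_one (carrier G)" using char_eqI[OF assms char_one_in[OF sub]] by (simp add: char_one_def)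
    thus False using False by simp
  qed
  have "(\<Sum>x\<in>carrier G. \<chi> x) = (\<Sum>x\<in>carrier G. \<chi> (a \<otimes> x))"
    using sum.reindex_bij_betw[OF bij_cmult[OF a(1)], of \<chi>] by simp
  also have "\<dots> = \<chi> a * (\<Sum>x\<in>carrier G. \<chi> x)"
    by (simp add: sum_distrib_left char_mult_hom[OF assms a(1)])
  finally have "(1 - \<chi> a) * (\<Sum>x\<in>carrier G. \<chi> x) = 0" by (simp add: algebra_simps)
  thus ?thesis using a(2) False by simp
qed

lemma char_sum_chars:
  fixes x :: 'a
  assumes fin: "finite (carrier G)" and x: "x \<in> carrier G"
  shows "(\<Sum>\<chi>\<in>characters G (carrier G). (\<chi> x :: 'k::{alg_closed_field,field_char_0}))
     = (if x = \<one> then of_nat (card (characters G (carrier G) :: ('a \<Rightarrow> 'k) set)) else 0)"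
proof (cases "x = \<one>")
  case True
  have sub: "subgroup (carrier G) G" by (rule subgroup_self)
  have "(\<Sum>\<chi>\<in>characters G (carrier G). (\<chi> \<one> :: 'k)) = (\<Sum>\<chi>\<in>(characters G (carrier G) :: ('a \<Rightarrow> 'k) set). (1::'k))"
    by (rule sum.cong) (simp_all add: char_one_val[OF sub])
  thus ?thesis using True by simp
next
  case False
  let ?C = "characters G (carrier G) :: ('a \<Rightarrow> 'k) set"
  have sub: "subgroup (carrier G) G" by (rule subgroup_self)
  obtain \<alpha> :: "'a \<Rightarrow> 'k" where al: "\<alpha> \<in> ?C" "\<alpha> x \<noteq> 1" using sep_char[OF fin x False] by blast
  have bij: "bij_betw (char_mult (carrier G) \<alpha>) ?C ?C"
  proof (rule bij_betw_byWitness[where f'="char_mult (carrier G) (char_inv (carrier G) \<alpha>)"])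
    show "\<forall>a\<in>?C. char_mult (carrier G) (char_inv (carrier G) \<alpha>) (char_mult (carrier G) \<alpha> a) = a"
      using al(1) by (simp add: char_mult_assoc[symmetric] char_mult_inv char_mult_one)
    show "\<forall>a\<in>?C. char_mult (carrier G) \<alpha> (char_mult (carrier G) (char_inv (carrier G) \<alpha>) a) = a"
      using al(1) by (simp add: char_mult_assoc[symmetric] char_mult_inv char_mult_one char_mult_comm[of _ \<alpha>])
    show "char_mult (carrier G) \<alpha> ` ?C \<subseteq> ?C" using char_mult_in[OF sub al(1)] by blast
    show "char_mult (carrier G) (char_inv (carrier G) \<alpha>) ` ?C \<subseteq> ?C"
      using char_mult_in[OF sub char_inv_in[OF sub al(1)]] by blast
  qed
  have "(\<Sum>\<chi>\<in>?C. \<chi> x) = (\<Sum>\<chi>\<in>?C. char_mult (carrier G) \<alpha> \<chi> x)"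
    using sum.reindex_bij_betw[OF bij, of "\<lambda>\<chi>. \<chi> x"] by simp
  also have "\<dots> = \<alpha> x * (\<Sum>\<chi>\<in>?C. \<chi> x)"
    using x by (simp add: sum_distrib_left char_mult_def)
  finally have "(1 - \<alpha> x) * (\<Sum>\<chi>\<in>?C. \<chi> x) = 0" by (simp add: algebra_simps)
  thus ?thesis using al(2) False by simp
qed

lemma roots_unity_finite:
  assumes "0 < n"
  shows "finite {z :: 'k::field. z ^ n = 1}"
proof -
  let ?p = "Polynomial.monom (1::'k) n - 1"
  have pe: "poly ?p z = z ^ n - 1" for z by (simp add: poly_monom)
  have "?p \<noteq> 0"
  proof
    assume "?p = 0" hence "poly ?p 0 = 0" by simp
    thus False using pe[of 0] assms by (simp add: zero_power)
  qed
  hence "finite {z. poly ?p z = 0}" by (rule poly_roots_finite)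
  thus ?thesis using pe by simp
qed

lemma chars_finite:
  assumes fin: "finite (carrier G)"
  shows "finite (characters G (carrier G) :: ('a \<Rightarrow> 'k::field) set)"
proof -
  let ?C = "characters G (carrier G) :: ('a \<Rightarrow> 'k) set"
  let ?n = "order G"
  have sub: "subgroup (carrier G) G" by (rule subgroup_self)
  have n0: "0 < ?n" using fin one_closed unfolding order_def by (auto simp: card_gt_0_iff)
  let ?R = "{z :: 'k. z ^ ?n = 1}"
  have R: "finite ?R" by (rule roots_unity_finite[OF n0])
  have "restrict \<chi> (carrier G) \<in> carrier G \<rightarrow>\<^sub>E ?R" if "\<chi> \<in> ?C" for \<chi>
  proof -
    have "\<chi> x ^ ?n = 1" if "x \<in> carrier G" for x
      using char_pow[OF sub \<open>\<chi> \<in> ?C\<close> that, of ?n, symmetric] pow_order_eq_1[OF that]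
        char_one_val[OF sub \<open>\<chi> \<in> ?C\<close>] by simp
    thus ?thesis by auto
  qed
  hence im: "(\<lambda>\<chi>. restrict \<chi> (carrier G)) ` ?C \<subseteq> carrier G \<rightarrow>\<^sub>E ?R" by blast
  have inj: "inj_on (\<lambda>\<chi>. restrict \<chi> (carrier G)) ?C"
  proof (rule inj_onI)
    fix \<alpha> \<beta> assume a: "\<alpha> \<in> ?C" "\<beta> \<in> ?C" "restrict \<alpha> (carrier G) = restrict \<beta> (carrier G)"
    show "\<alpha> = \<beta>"
    proof (rule char_eqI[OF a(1,2)])
      fix x assume "x \<in> carrier G"
      thus "\<alpha> x = \<beta> x" using fun_cong[OF a(3), of x] by simp
    qed
  qed
  have "finite (carrier G \<rightarrow>\<^sub>E ?R)" using fin R by (rule finite_PiE)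
  hence "finite ((\<lambda>\<chi>. restrict \<chi> (carrier G)) ` ?C)" using im by (rule finite_subset[rotated])
  thus ?thesis using inj by (rule finite_imageD)
qed

lemma card_chars:
  assumes fin: "finite (carrier G)"
  shows "card (characters G (carrier G) :: ('a \<Rightarrow> 'k::{alg_closed_field,field_char_0}) set) = card (carrier G)"
proof -
  let ?C = "characters G (carrier G) :: ('a \<Rightarrow> 'k) set"
  have sub: "subgroup (carrier G) G" by (rule subgroup_self)
  have "(\<Sum>x\<in>carrier G. \<Sum>\<chi>\<in>?C. \<chi> x) = (\<Sum>x\<in>carrier G. (if x = \<one> then of_nat (card ?C) else (0::'k)))"
  proof (rule sum.cong)
    fix x assume "x \<in> carrier G"
    thus "(\<Sum>\<chi>\<in>?C. \<chi> x) = (if x = \<one> then of_nat (card ?C) else (0::'k))"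
      by (rule char_sum_chars[OF fin])
  qed simp
  also have "\<dots> = of_nat (card ?C)" using fin by (simp add: sum.delta')
  finally have 1: "(\<Sum>x\<in>carrier G. \<Sum>\<chi>\<in>?C. \<chi> x) = of_nat (card ?C)" .
  have o: "(char_one (carrier G) :: 'a \<Rightarrow> 'k) \<in> ?C" by (rule char_one_in[OF sub])
  have "(\<Sum>\<chi>\<in>?C. \<Sum>x\<in>carrier G. \<chi> x) = (\<Sum>\<chi>\<in>?C. (if \<chi> = char_one (carrier G) then of_nat (card (carrier G)) else (0::'k)))"
  proof (rule sum.cong)
    fix \<chi> :: "'a \<Rightarrow> 'k" assume "\<chi> \<in> ?C"
    thus "(\<Sum>x\<in>carrier G. \<chi> x) = (if \<chi> = char_one (carrier G) then of_nat (card (carrier G)) else (0::'k))"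
      by (rule char_sum_elems)
  qed simp
  also have "\<dots> = (if finite ?C then of_nat (card (carrier G)) else 0)" using o
    by (cases "finite ?C") (simp_all add: sum.delta')
  finally have 2: "(\<Sum>\<chi>\<in>?C. \<Sum>x\<in>carrier G. \<chi> x) = (if finite ?C then of_nat (card (carrier G)) else 0)" .
  have "of_nat (card ?C) = (if finite ?C then of_nat (card (carrier G)) else (0::'k))"
  proof -
    have "(\<Sum>x\<in>carrier G. \<Sum>\<chi>\<in>?C. \<chi> x) = (\<Sum>\<chi>\<in>?C. \<Sum>x\<in>carrier G. \<chi> x)" by (rule sum.swap)
    thus ?thesis using 1 2 by simp
  qed
  moreover have "card (carrier G) > 0" using fin one_closed by (auto simp: card_gt_0_iff)
  moreover have "finite ?C" by (rule chars_finite[OF fin])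
  ultimately show ?thesis by simp
qed


lemma chars_reindex:
  assumes "\<beta> \<in> characters G (carrier G)"
  shows "(\<Sum>\<gamma>\<in>characters G (carrier G). F \<gamma>) = (\<Sum>\<gamma>\<in>characters G (carrier G). F (char_mult (carrier G) \<beta> \<gamma>))"
proof -
  let ?C = "characters G (carrier G) :: ('a \<Rightarrow> 'k::field) set"
  have sub: "subgroup (carrier G) G" by (rule subgroup_self)
  have bij: "bij_betw (char_mult (carrier G) \<beta>) ?C ?C"
  proof (rule bij_betw_byWitness[where f'="char_mult (carrier G) (char_inv (carrier G) \<beta>)"])
    show "\<forall>a\<in>?C. char_mult (carrier G) (char_inv (carrier G) \<beta>) (char_mult (carrier G) \<beta> a) = a"
      using assms by (simp add: char_mult_assoc[symmetric] char_mult_inv char_mult_one)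
    show "\<forall>a\<in>?C. char_mult (carrier G) \<beta> (char_mult (carrier G) (char_inv (carrier G) \<beta>) a) = a"
      using assms by (simp add: char_mult_assoc[symmetric] char_mult_inv char_mult_one char_mult_comm[of _ \<beta>])
    show "char_mult (carrier G) \<beta> ` ?C \<subseteq> ?C" using char_mult_in[OF sub assms] by blast
    show "char_mult (carrier G) (char_inv (carrier G) \<beta>) ` ?C \<subseteq> ?C"
      using char_mult_in[OF sub char_inv_in[OF sub assms]] by blast
  qed
  show ?thesis using sum.reindex_bij_betw[OF bij, of F] by simp
qed

end

definition conv :: "('a, 'b) monoid_scheme \<Rightarrow> ('a \<Rightarrow> 'k::field) \<Rightarrow> ('a \<Rightarrow> 'k) \<Rightarrow> ('a \<Rightarrow> 'k)" where
  "conv P a b = (\<lambda>g. if g \<in> carrier P then (\<Sum>c\<in>carrier P. a c * b (inv\<^bsub>P\<^esub> c \<otimes>\<^bsub>P\<^esub> g)) else 0)"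

definition supp_in :: "'a set \<Rightarrow> ('a \<Rightarrow> 'k::zero) \<Rightarrow> bool" where
  "supp_in S a \<longleftrightarrow> (\<forall>x. x \<notin> S \<longrightarrow> a x = 0)"

context group
begin

lemma bij_cmult': "a \<in> carrier G \<Longrightarrow> bij_betw (\<lambda>x. a \<otimes> x) (carrier G) (carrier G)"
proof (rule bij_betw_byWitness[where f'="\<lambda>x. inv a \<otimes> x"])
  assume a: "a \<in> carrier G"
  show "\<forall>x\<in>carrier G. inv a \<otimes> (a \<otimes> x) = x" using a by (simp add: m_assoc[symmetric])
  show "\<forall>x\<in>carrier G. a \<otimes> (inv a \<otimes> x) = x" using a by (simp add: m_assoc[symmetric])
  show "(\<lambda>x. a \<otimes> x) ` carrier G \<subseteq> carrier G" using a by auto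
  show "(\<lambda>x. inv a \<otimes> x) ` carrier G \<subseteq> carrier G" using a by auto
qed

lemma conv_supp: "supp_in (carrier G) (conv G a b)"
  unfolding supp_in_def conv_def by simp

lemma conv_assoc: "conv G (conv G a b) c = conv G a (conv G b c)"
proof (rule ext)
  fix g show "conv G (conv G a b) c g = conv G a (conv G b c) g"
  proof (cases "g \<in> carrier G")
    case False thus ?thesis by (simp add: conv_def)
  next
    case g: True
    have inner: "(\<Sum>x\<in>carrier G. b (inv d \<otimes> x) * c (inv x \<otimes> g)) = conv G b c (inv d \<otimes> g)"
      if d: "d \<in> carrier G" for d
    proof -
      have "(\<Sum>x\<in>carrier G. b (inv d \<otimes> x) * c (inv x \<otimes> g))
          = (\<Sum>e\<in>carrier G. b (inv d \<otimes> (d \<otimes> e)) * c (inv (d \<otimes> e) \<otimes> g))"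
        using sum.reindex_bij_betw[OF bij_cmult'[OF d], of "\<lambda>x. b (inv d \<otimes> x) * c (inv x \<otimes> g)"] by simp
      also have "\<dots> = (\<Sum>e\<in>carrier G. b e * c (inv e \<otimes> (inv d \<otimes> g)))"
        using d g by (intro sum.cong) (simp_all add: m_assoc[symmetric] inv_mult_group)
      also have "\<dots> = conv G b c (inv d \<otimes> g)" using d g by (simp add: conv_def)
      finally show ?thesis .
    qed
    have "conv G (conv G a b) c g = (\<Sum>x\<in>carrier G. (\<Sum>d\<in>carrier G. a d * b (inv d \<otimes> x)) * c (inv x \<otimes> g))"
      using g by (simp add: conv_def)
    also have "\<dots> = (\<Sum>x\<in>carrier G. \<Sum>d\<in>carrier G. a d * (b (inv d \<otimes> x) * c (inv x \<otimes> g)))"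
      by (simp add: sum_distrib_right mult.assoc)
    also have "\<dots> = (\<Sum>d\<in>carrier G. a d * (\<Sum>x\<in>carrier G. b (inv d \<otimes> x) * c (inv x \<otimes> g)))"
      by (subst sum.swap) (simp add: sum_distrib_left)
    also have "\<dots> = (\<Sum>d\<in>carrier G. a d * conv G b c (inv d \<otimes> g))"
      by (intro sum.cong) (simp_all add: inner)
    also have "\<dots> = conv G a (conv G b c) g" using g by (simp add: conv_def)
    finally show ?thesis .
  qed
qed

lemma conv_delta_left:
  assumes fin: "finite (carrier G)" and x: "x \<in> carrier G"
  shows "conv G (basis_el x) a = (\<lambda>g. if g \<in> carrier G then a (inv x \<otimes> g) else 0)"
proof (rule ext)
  fix g show "conv G (basis_el x) a g = (if g \<in> carrier G then a (inv x \<otimes> g) else 0)"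
  proof (cases "g \<in> carrier G")
    case False thus ?thesis by (simp add: conv_def)
  next
    case g: True
    have "conv G (basis_el x) a g = (\<Sum>c\<in>carrier G. if c = x then a (inv c \<otimes> g) else 0)"
      using g by (auto simp: conv_def basis_el_def intro!: sum.cong)
    also have "\<dots> = a (inv x \<otimes> g)" using fin x by (simp add: sum.delta')
    finally show ?thesis using g by simp
  qed
qed

lemma conv_delta_right:
  assumes fin: "finite (carrier G)" and x: "x \<in> carrier G"
  shows "conv G a (basis_el x) = (\<lambda>g. if g \<in> carrier G then a (g \<otimes> inv x) else 0)"
proof (rule ext)
  fix g show "conv G a (basis_el x) g = (if g \<in> carrier G then a (g \<otimes> inv x) else 0)"
  proof (cases "g \<in> carrier G")
    case False thus ?thesis by (simp add: conv_def)
  next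
    case g: True
    have eq: "(inv c \<otimes> g = x) \<longleftrightarrow> (c = g \<otimes> inv x)" if c: "c \<in> carrier G" for c
    proof
      assume "inv c \<otimes> g = x"
      hence "c \<otimes> (inv c \<otimes> g) = c \<otimes> x" by simp
      hence "g = c \<otimes> x" using c g by (simp add: m_assoc[symmetric])
      thus "c = g \<otimes> inv x" using c x by (simp add: m_assoc)
    next
      assume "c = g \<otimes> inv x"
      thus "inv c \<otimes> g = x" using g x by (simp add: inv_mult_group m_assoc)
    qed
    have "conv G a (basis_el x) g = (\<Sum>c\<in>carrier G. if c = g \<otimes> inv x then a c else 0)"
      using g eq by (auto simp: conv_def basis_el_def intro!: sum.cong)
    also have "\<dots> = a (g \<otimes> inv x)" using fin g x by (simp add: sum.delta')
    finally show ?thesis using g by simp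
  qed
qed

lemma conv_one_left:
  assumes fin: "finite (carrier G)" and "supp_in (carrier G) a"
  shows "conv G (basis_el \<one>) a = a"
  using assms by (auto simp: conv_delta_left[OF fin] supp_in_def)

lemma conv_one_right:
  assumes fin: "finite (carrier G)" and "supp_in (carrier G) a"
  shows "conv G a (basis_el \<one>) = a"
  using assms by (auto simp: conv_delta_right[OF fin] supp_in_def)

lemma conv_sum_left:
  "conv G (\<lambda>g. \<Sum>i\<in>I. c i * f i g) b = (\<lambda>g. \<Sum>i\<in>I. c i * conv G (f i) b g)"
  by (rule ext) (auto simp: conv_def sum_distrib_right sum_distrib_left mult.assoc intro: sum.swap)

lemma conv_sum_right:
  "conv G b (\<lambda>g. \<Sum>i\<in>I. c i * f i g) = (\<lambda>g. \<Sum>i\<in>I. c i * conv G b (f i) g)"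
  by (rule ext) (auto simp: conv_def sum_distrib_right sum_distrib_left mult_ac intro: sum.swap)

lemma conv_smult_left: "conv G (\<lambda>g. c * a g) b = (\<lambda>g. c * conv G a b g)"
  by (rule ext) (auto simp: conv_def sum_distrib_left mult.assoc)

lemma conv_smult_right: "conv G b (\<lambda>g. c * a g) = (\<lambda>g. c * conv G b a g)"
  by (rule ext) (auto simp: conv_def sum_distrib_left mult_ac)

lemma inverse_unique_conv:
  assumes fin: "finite (carrier G)"
    and y: "supp_in (carrier G) y" "conv G x y = basis_el \<one>" "conv G y x = basis_el \<one>"
    and z: "supp_in (carrier G) z" "conv G x z = basis_el \<one>" "conv G z x = basis_el \<one>"
  shows "y = z"
proof -
  have "y = conv G (conv G z x) y" using z(3) conv_one_left[OF fin y(1)] by simp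
  also have "\<dots> = conv G z (conv G x y)" by (rule conv_assoc)
  also have "\<dots> = z" using y(2) conv_one_right[OF fin z(1)] by simp
  finally show ?thesis .
qed

end

lemma char_inv_mult_one_iff:
  assumes "\<alpha> \<in> characters G K" "\<beta> \<in> characters G K"
  shows "char_mult K (char_inv K \<alpha>) \<beta> = char_one K \<longleftrightarrow> \<alpha> = \<beta>"
proof
  assume h: "char_mult K (char_inv K \<alpha>) \<beta> = char_one K"
  show "\<alpha> = \<beta>"
  proof (rule ext)
    fix x show "\<alpha> x = \<beta> x"
    proof (cases "x \<in> K")
      case True
      have "inverse (\<alpha> x) * \<beta> x = 1" using fun_cong[OF h, of x] True
        by (simp add: char_mult_def char_inv_def char_one_def)
      moreover have "\<alpha> x \<noteq> 0" using assms(1) True by (simp add: characters_def)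
      ultimately show ?thesis by (simp add: field_simps)
    next
      case False thus ?thesis using assms by (simp add: characters_def)
    qed
  qed
next
  assume "\<alpha> = \<beta>"
  thus "char_mult K (char_inv K \<alpha>) \<beta> = char_one K"
    using assms(1) by (auto simp: char_mult_def char_inv_def char_one_def characters_def)
qed

locale twist_setting = group +
  fixes H :: "'a set" and \<omega> :: "('a \<Rightarrow> 'k::{alg_closed_field, field_char_0}) \<Rightarrow> ('a \<Rightarrow> 'k) \<Rightarrow> 'k"
  assumes fin: "finite (carrier G)" and subH: "subgroup H G"
    and commH: "\<forall>x\<in>H. \<forall>y\<in>H. x \<otimes>\<^bsub>G\<^esub> y = y \<otimes>\<^bsub>G\<^esub> x" and coc: "two_cocycle G H \<omega>"
begin

abbreviation C :: "('a \<Rightarrow> 'k) set" where "C \<equiv> characters G H"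

abbreviation Hg where "Hg \<equiv> G\<lparr>carrier := H\<rparr>"

lemma Hc: "H \<subseteq> carrier G" by (rule subgroup.subset[OF subH])

lemma finH: "finite H" using fin Hc by (rule finite_subset[rotated])

lemma Hg_comm: "comm_group Hg"
proof -
  interpret Hgr: group Hg by (rule subgroup.subgroup_is_group[OF subH is_group])
  show ?thesis by (rule Hgr.group_comm_groupI) (use commH in simp)
qed

lemma chars_Hg: "characters Hg H = characters G H"
  by (simp add: characters_def)

lemma C_card: "card C = card H"
  using comm_group.card_chars[OF Hg_comm, where 'k='k] finH by (simp add: chars_Hg)

lemma C_fin: "finite C"
  using comm_group.chars_finite[OF Hg_comm, where 'k='k] finH by (simp add: chars_Hg)

lemma sum_elems: "\<alpha> \<in> C \<Longrightarrow> (\<Sum>x\<in>H. \<alpha> x) = (if \<alpha> = char_one H then of_nat (card H) else 0)"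
  using comm_group.char_sum_elems[OF Hg_comm, of \<alpha>] by (simp add: chars_Hg)

lemma sum_chars: "x \<in> H \<Longrightarrow> (\<Sum>\<alpha>\<in>C. \<alpha> x) = (if x = \<one> then of_nat (card H) else 0)"
  using comm_group.char_sum_chars[OF Hg_comm, where 'k='k, of x] finH C_card by (simp add: chars_Hg)

lemma C_reindex: "\<beta> \<in> C \<Longrightarrow> (\<Sum>\<gamma>\<in>C. F \<gamma>) = (\<Sum>\<gamma>\<in>C. F (char_mult H \<beta> \<gamma>))"
  using comm_group.chars_reindex[OF Hg_comm, of \<beta> F] by (simp add: chars_Hg)

lemma one_C: "char_one H \<in> C" by (rule char_one_in[OF subH])
lemma mult_C: "\<alpha> \<in> C \<Longrightarrow> \<beta> \<in> C \<Longrightarrow> char_mult H \<alpha> \<beta> \<in> C" by (rule char_mult_in[OF subH])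
lemma inv_C: "\<alpha> \<in> C \<Longrightarrow> char_inv H \<alpha> \<in> C" by (rule char_inv_in[OF subH])

lemma n_pos: "0 < card H"
  using finH subgroup.one_closed[OF subH] by (auto simp: card_gt_0_iff)

end

context twist_setting
begin

abbreviation nn :: 'k where "nn \<equiv> of_nat (card H)"

lemma nn_nz: "nn \<noteq> 0" using n_pos by simp

definition D :: "(('a \<Rightarrow> 'k) \<Rightarrow> 'k) \<Rightarrow> ('a \<Rightarrow> 'k)" where
  "D c = (\<lambda>g. \<Sum>\<alpha>\<in>C. c \<alpha> * idem G H \<alpha> g)"

lemma e_out: "x \<notin> H \<Longrightarrow> idem G H \<alpha> x = 0"
  by (simp add: idem_def)

lemma e_val: "x \<in> H \<Longrightarrow> \<alpha> \<in> C \<Longrightarrow> idem G H \<alpha> x = inverse (\<alpha> x) / nn"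
  by (simp add: idem_def char_inv_val[OF subH])

lemma e_supp: "supp_in (carrier G) (idem G H \<alpha>)"
  using Hc by (auto simp: supp_in_def idem_def)

lemma H_mem: "x \<in> H \<Longrightarrow> x \<in> carrier G" using Hc by blast

lemma conv_e:
  assumes a: "\<alpha> \<in> C" and b: "\<beta> \<in> C"
  shows "conv G (idem G H \<alpha>) (idem G H \<beta>) = (if \<alpha> = \<beta> then idem G H \<alpha> else (\<lambda>_. 0))"
proof (rule ext)
  fix g
  show "conv G (idem G H \<alpha>) (idem G H \<beta>) g = (if \<alpha> = \<beta> then idem G H \<alpha> else (\<lambda>_. 0)) g"
  proof (cases "g \<in> carrier G")
    case False
    hence "g \<notin> H" using Hc by blast
    thus ?thesis using False by (simp add: conv_def e_out)
  next
    case g: True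
    have "conv G (idem G H \<alpha>) (idem G H \<beta>) g = (\<Sum>c\<in>carrier G. idem G H \<alpha> c * idem G H \<beta> (inv c \<otimes> g))"
      using g by (simp add: conv_def)
    also have "\<dots> = (\<Sum>c\<in>H. idem G H \<alpha> c * idem G H \<beta> (inv c \<otimes> g))"
      using fin Hc by (intro sum.mono_neutral_right) (auto simp: e_out)
    finally have s: "conv G (idem G H \<alpha>) (idem G H \<beta>) g = (\<Sum>c\<in>H. idem G H \<alpha> c * idem G H \<beta> (inv c \<otimes> g))" .
    show ?thesis
    proof (cases "g \<in> H")
      case False
      have "inv c \<otimes> g \<notin> H" if c: "c \<in> H" for c
      proof
        assume "inv c \<otimes> g \<in> H"
        hence "c \<otimes> (inv c \<otimes> g) \<in> H" using subgroup.m_closed[OF subH c] by blast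
        thus False using False c g H_mem[OF c] by (simp add: m_assoc[symmetric])
      qed
      hence "conv G (idem G H \<alpha>) (idem G H \<beta>) g = 0" using s by (simp add: e_out)
      thus ?thesis using False by (simp add: e_out)
    next
      case gH: True
      have trm: "idem G H \<alpha> c * idem G H \<beta> (inv c \<otimes> g)
          = char_mult H (char_inv H \<alpha>) \<beta> c * (inverse (\<beta> g) / (nn * nn))" if c: "c \<in> H" for c
      proof -
        have ic: "inv c \<in> H" by (rule subgroup.m_inv_closed[OF subH c])
        have icg: "inv c \<otimes> g \<in> H" by (rule subgroup.m_closed[OF subH ic gH])
        have "\<beta> (inv c \<otimes> g) = \<beta> (inv c) * \<beta> g" by (rule char_mult_hom[OF b ic gH])
        also have "\<dots> = inverse (\<beta> c) * \<beta> g" using char_inv_val[OF subH b c] by simp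
        finally have bb: "\<beta> (inv c \<otimes> g) = inverse (\<beta> c) * \<beta> g" .
        have "idem G H \<alpha> c * idem G H \<beta> (inv c \<otimes> g) = inverse (\<alpha> c) / nn * (inverse (\<beta> (inv c \<otimes> g)) / nn)"
          using e_val[OF c a] e_val[OF icg b] by simp
        also have "\<dots> = inverse (\<alpha> c) * \<beta> c * (inverse (\<beta> g) / (nn * nn))"
        proof -
          have "inverse (\<beta> (inv c \<otimes> g)) = \<beta> c * inverse (\<beta> g)"
            unfolding bb using char_nz[OF b c] by (simp add: inverse_mult_distrib)
          thus ?thesis by (simp add: divide_inverse inverse_mult_distrib mult_ac)
        qed
        also have "\<dots> = char_mult H (char_inv H \<alpha>) \<beta> c * (inverse (\<beta> g) / (nn * nn))"
          using c by (simp add: char_mult_def char_inv_def)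
        finally show ?thesis .
      qed
      have "conv G (idem G H \<alpha>) (idem G H \<beta>) g = (\<Sum>c\<in>H. char_mult H (char_inv H \<alpha>) \<beta> c) * (inverse (\<beta> g) / (nn * nn))"
      proof -
        have "conv G (idem G H \<alpha>) (idem G H \<beta>) g = (\<Sum>c\<in>H. char_mult H (char_inv H \<alpha>) \<beta> c * (inverse (\<beta> g) / (nn * nn)))"
          using s trm by (intro trans[OF s] sum.cong) simp_all
        thus ?thesis by (simp only: sum_distrib_right)
      qed
      also have "\<dots> = (if \<alpha> = \<beta> then nn else 0) * (inverse (\<beta> g) / (nn * nn))"
        using sum_elems[OF mult_C[OF inv_C[OF a] b]] char_inv_mult_one_iff[OF a b] by simp
      also have "\<dots> = (if \<alpha> = \<beta> then idem G H \<alpha> else (\<lambda>_. 0)) g"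
        using e_val[OF gH a] nn_nz by auto
      finally show ?thesis .
    qed
  qed
qed

lemma D_mult: "conv G (D c) (D d) = D (\<lambda>\<alpha>. c \<alpha> * d \<alpha>)"
proof -
  have r: "conv G (idem G H \<alpha>) (D d) = (\<lambda>g. d \<alpha> * idem G H \<alpha> g)" if a: "\<alpha> \<in> C" for \<alpha>
  proof -
    have "conv G (idem G H \<alpha>) (D d) = (\<lambda>g. \<Sum>\<beta>\<in>C. d \<beta> * conv G (idem G H \<alpha>) (idem G H \<beta>) g)"
      unfolding D_def by (rule conv_sum_right)
    also have "\<dots> = (\<lambda>g. \<Sum>\<beta>\<in>C. if \<beta> = \<alpha> then d \<alpha> * idem G H \<alpha> g else 0)"
      using a by (intro ext sum.cong) (auto simp: conv_e)
    also have "\<dots> = (\<lambda>g. d \<alpha> * idem G H \<alpha> g)" using a C_fin by (simp add: sum.delta')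
    finally show ?thesis .
  qed
  have "conv G (D c) (D d) = (\<lambda>g. \<Sum>\<alpha>\<in>C. c \<alpha> * conv G (idem G H \<alpha>) (D d) g)"
    unfolding D_def[of c] by (rule conv_sum_left)
  also have "\<dots> = (\<lambda>g. \<Sum>\<alpha>\<in>C. c \<alpha> * (d \<alpha> * idem G H \<alpha> g))"
    by (intro ext sum.cong) (simp_all add: r)
  also have "\<dots> = D (\<lambda>\<alpha>. c \<alpha> * d \<alpha>)"
    unfolding D_def by (simp add: mult.assoc)
  finally show ?thesis .
qed

lemma sum_e: "(\<lambda>g. \<Sum>\<alpha>\<in>C. idem G H \<alpha> g) = basis_el \<one>"
proof (rule ext)
  fix g show "(\<Sum>\<alpha>\<in>C. idem G H \<alpha> g) = basis_el \<one> g"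
  proof (cases "g \<in> H")
    case False
    moreover have "\<one> \<in> H" by (rule subgroup.one_closed[OF subH])
    ultimately show ?thesis by (auto simp: e_out basis_el_def)
  next
    case True
    have ig: "inv g \<in> H" by (rule subgroup.m_inv_closed[OF subH True])
    have "(\<Sum>\<alpha>\<in>C. idem G H \<alpha> g) = (\<Sum>\<alpha>\<in>C. \<alpha> (inv g)) / nn"
      using True by (simp add: idem_def sum_divide_distrib)
    also have "\<dots> = (if inv g = \<one> then nn else 0) / nn" using sum_chars[OF ig] by simp
    also have "\<dots> = basis_el \<one> g"
      using nn_nz H_mem[OF True] by (auto simp: basis_el_def inv_eq_1_iff)
    finally show ?thesis .
  qed
qed

lemma D_one: "D (\<lambda>_. 1) = basis_el \<one>"
  using sum_e by (simp add: D_def)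

lemma D_cong: "(\<And>\<alpha>. \<alpha> \<in> C \<Longrightarrow> c \<alpha> = d \<alpha>) \<Longrightarrow> D c = D d"
  unfolding D_def by (intro ext sum.cong) auto

lemma D_out: "g \<notin> H \<Longrightarrow> D c g = 0"
  by (simp add: D_def e_out)

lemma D_supp: "supp_in (carrier G) (D c)"
  unfolding supp_in_def
proof (intro allI impI)
  fix x assume "x \<notin> carrier G"
  hence "x \<notin> H" using Hc by blast
  thus "D c x = 0" by (rule D_out)
qed

end

context twist_setting
begin

abbreviation GG where "GG \<equiv> G \<times>\<times> G"

lemma GG_group: "group GG" by (rule DirProd_group[OF is_group is_group])

lemma GG_fin: "finite (carrier GG)" using fin by simp

lemma tmult_conv: "tmult G x y = conv GG x y"
proof (rule ext)
  fix p :: "'a \<times> 'a"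
  obtain a b where p: "p = (a, b)" by fastforce
  show "tmult G x y p = conv GG x y p"
  proof (cases "a \<in> carrier G \<and> b \<in> carrier G")
    case False thus ?thesis using p by (auto simp: tmult_def conv_def)
  next
    case True
    have "conv GG x y p = (\<Sum>q\<in>carrier G \<times> carrier G. x q * y (inv\<^bsub>GG\<^esub> q \<otimes>\<^bsub>GG\<^esub> (a, b)))"
      using True p by (simp add: conv_def)
    also have "\<dots> = (\<Sum>(c, d)\<in>carrier G \<times> carrier G. x (c, d) * y (inv c \<otimes> a, inv d \<otimes> b))"
      by (intro sum.cong) (auto simp: inv_DirProd[OF is_group is_group])
    also have "\<dots> = tmult G x y p" using True p by (simp add: tmult_def)
    finally show ?thesis by simp
  qed
qed

lemma tone_eq: "tone G = basis_el \<one>\<^bsub>GG\<^esub>"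
  by (auto simp: tone_def basis_el_def)

lemma tensor_tmult: "tmult G (tensor a b) (tensor c d) = tensor (conv G a c) (conv G b d)"
proof (rule ext)
  fix p :: "'a \<times> 'a"
  obtain x y where p: "p = (x, y)" by fastforce
  show "tmult G (tensor a b) (tensor c d) p = tensor (conv G a c) (conv G b d) p"
  proof (cases "x \<in> carrier G \<and> y \<in> carrier G")
    case False thus ?thesis using p by (auto simp: tmult_def conv_def tensor_def)
  next
    case True
    have "tmult G (tensor a b) (tensor c d) p
        = (\<Sum>(c', d')\<in>carrier G \<times> carrier G. (a c' * c (inv c' \<otimes> x)) * (b d' * d (inv d' \<otimes> y)))"
      using True p by (auto simp: tmult_def tensor_def mult_ac intro!: sum.cong)
    also have "\<dots> = (\<Sum>c'\<in>carrier G. a c' * c (inv c' \<otimes> x)) * (\<Sum>d'\<in>carrier G. b d' * d (inv d' \<otimes> y))"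
      by (simp add: sum_product sum.cartesian_product)
    also have "\<dots> = tensor (conv G a c) (conv G b d) p" using True p by (simp add: tensor_def conv_def)
    finally show ?thesis .
  qed
qed

definition T :: "(('a \<Rightarrow> 'k) \<Rightarrow> ('a \<Rightarrow> 'k) \<Rightarrow> 'k) \<Rightarrow> ('a \<times> 'a \<Rightarrow> 'k)" where
  "T c = (\<lambda>p. \<Sum>i\<in>C \<times> C. c (fst i) (snd i) * tensor (idem G H (fst i)) (idem G H (snd i)) p)"

lemma twistJ_T: "twistJ G H \<omega> = T \<omega>"
  unfolding twistJ_def T_def by (intro ext) (simp add: sum.cartesian_product case_prod_beta)

lemma tensor_e_tmult:
  assumes "i \<in> C \<times> C" "j \<in> C \<times> C"
  shows "tmult G (tensor (idem G H (fst i)) (idem G H (snd i))) (tensor (idem G H (fst j)) (idem G H (snd j)))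
    = (if i = j then tensor (idem G H (fst i)) (idem G H (snd i)) else (\<lambda>_. 0))"
proof -
  have z1: "tensor (\<lambda>_. 0) f = (\<lambda>_. (0::'k))" "tensor f (\<lambda>_. 0) = (\<lambda>_. (0::'k))" for f :: "'a \<Rightarrow> 'k"
    by (auto simp: tensor_def)
  show ?thesis unfolding tensor_tmult
    using assms by (cases i, cases j) (auto simp: conv_e z1)
qed

lemma T_mult: "tmult G (T c) (T d) = T (\<lambda>\<alpha> \<beta>. c \<alpha> \<beta> * d \<alpha> \<beta>)"
proof -
  interpret GGr: group GG by (rule GG_group)
  let ?f = "\<lambda>i. tensor (idem G H (fst i)) (idem G H (snd i))"
  have r: "conv GG (?f i) (T d) = (\<lambda>p. d (fst i) (snd i) * ?f i p)" if i: "i \<in> C \<times> C" for i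
  proof -
    have "conv GG (?f i) (T d) = (\<lambda>p. \<Sum>j\<in>C \<times> C. d (fst j) (snd j) * conv GG (?f i) (?f j) p)"
      unfolding T_def by (rule GGr.conv_sum_right)
    also have "\<dots> = (\<lambda>p. \<Sum>j\<in>C \<times> C. if j = i then d (fst i) (snd i) * ?f i p else 0)"
      using i tensor_e_tmult[OF i] by (intro ext sum.cong) (auto simp: tmult_conv[symmetric])
    also have "\<dots> = (\<lambda>p. d (fst i) (snd i) * ?f i p)" using i C_fin by (simp add: sum.delta')
    finally show ?thesis .
  qed
  have "tmult G (T c) (T d) = (\<lambda>p. \<Sum>i\<in>C \<times> C. c (fst i) (snd i) * conv GG (?f i) (T d) p)"
    unfolding tmult_conv T_def[of c] by (rule GGr.conv_sum_left)
  also have "\<dots> = (\<lambda>p. \<Sum>i\<in>C \<times> C. c (fst i) (snd i) * (d (fst i) (snd i) * ?f i p))"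
    by (intro ext sum.cong) (simp_all add: r)
  also have "\<dots> = T (\<lambda>\<alpha> \<beta>. c \<alpha> \<beta> * d \<alpha> \<beta>)"
    unfolding T_def by (simp add: mult.assoc)
  finally show ?thesis .
qed

lemma T_cong: "(\<And>\<alpha> \<beta>. \<alpha> \<in> C \<Longrightarrow> \<beta> \<in> C \<Longrightarrow> c \<alpha> \<beta> = d \<alpha> \<beta>) \<Longrightarrow> T c = T d"
  unfolding T_def by (intro ext sum.cong) auto

lemma T_one: "T (\<lambda>_ _. 1) = tone G"
proof (rule ext)
  fix p :: "'a \<times> 'a"
  obtain a b where p: "p = (a, b)" by fastforce
  have "T (\<lambda>_ _. 1) p = (\<Sum>\<alpha>\<in>C. idem G H \<alpha> a) * (\<Sum>\<beta>\<in>C. idem G H \<beta> b)"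
    unfolding T_def p by (simp add: tensor_def sum_product sum.cartesian_product case_prod_beta)
  also have "\<dots> = basis_el \<one> a * basis_el \<one> b" using fun_cong[OF sum_e] by simp
  also have "\<dots> = tone G p" using p by (simp add: basis_el_def tone_def)
  finally show "T (\<lambda>_ _. 1) p = tone G p" .
qed

lemma T_supp: "supp_in (carrier GG) (T c)"
  unfolding supp_in_def
proof (intro allI impI)
  fix p :: "'a \<times> 'a" assume "p \<notin> carrier GG"
  hence "fst p \<notin> H \<or> snd p \<notin> H" using Hc by (cases p) auto
  thus "T c p = 0" unfolding T_def by (auto simp: tensor_def e_out case_prod_beta)
qed

lemma omega_nz: "\<alpha> \<in> C \<Longrightarrow> \<beta> \<in> C \<Longrightarrow> \<omega> \<alpha> \<beta> \<noteq> 0"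
  using coc by (simp add: two_cocycle_def)

lemma tinv_J: "tinv G (twistJ G H \<omega>) = T (\<lambda>\<alpha> \<beta>. inverse (\<omega> \<alpha> \<beta>))"
proof -
  interpret GGr: group GG by (rule GG_group)
  let ?J = "T \<omega>" and ?J' = "T (\<lambda>\<alpha> \<beta>. inverse (\<omega> \<alpha> \<beta>))"
  have 1: "tmult G ?J ?J' = tone G"
    using T_mult[of \<omega>] T_cong[of "\<lambda>\<alpha> \<beta>. \<omega> \<alpha> \<beta> * inverse (\<omega> \<alpha> \<beta>)" "\<lambda>_ _. 1"] omega_nz T_one by simp
  have 2: "tmult G ?J' ?J = tone G"
    using T_mult[of _ \<omega>] T_cong[of "\<lambda>\<alpha> \<beta>. inverse (\<omega> \<alpha> \<beta>) * \<omega> \<alpha> \<beta>" "\<lambda>_ _. 1"] omega_nz T_one by simp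
  have s: "\<forall>p. p \<notin> carrier G \<times> carrier G \<longrightarrow> ?J' p = 0" using T_supp[unfolded supp_in_def] by simp
  show ?thesis
    unfolding tinv_def twistJ_T
  proof (rule the_equality)
    show "(\<forall>p. p \<notin> carrier G \<times> carrier G \<longrightarrow> ?J' p = 0) \<and> tmult G ?J ?J' = tone G \<and> tmult G ?J' ?J = tone G"
      using 1 2 s by blast
  next
    fix y assume y: "(\<forall>p. p \<notin> carrier G \<times> carrier G \<longrightarrow> y p = 0) \<and> tmult G ?J y = tone G \<and> tmult G y ?J = tone G"
    show "y = ?J'"
    proof (rule GGr.inverse_unique_conv[OF GG_fin, of y ?J])
      show "supp_in (carrier GG) y" using y by (simp add: supp_in_def)
      show "supp_in (carrier GG) ?J'" by (rule T_supp)
      show "conv GG ?J y = basis_el \<one>\<^bsub>GG\<^esub>" using y by (simp add: tmult_conv tone_eq)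
      show "conv GG y ?J = basis_el \<one>\<^bsub>GG\<^esub>" using y by (simp add: tmult_conv tone_eq)
      show "conv GG ?J ?J' = basis_el \<one>\<^bsub>GG\<^esub>" using 1 by (simp add: tmult_conv tone_eq)
      show "conv GG ?J' ?J = basis_el \<one>\<^bsub>GG\<^esub>" using 2 by (simp add: tmult_conv tone_eq)
    qed
  qed
qed

lemma comult_basis: "x \<in> carrier G \<Longrightarrow> comult G (basis_el x) = tensor (basis_el x) (basis_el x)"
  by (auto simp: comult_def tensor_def basis_el_def)

end

locale twist_eta = twist_setting G H \<omega>
  for G (structure) and H and \<omega> :: "('a \<Rightarrow> 'k::{alg_closed_field, field_char_0}) \<Rightarrow> ('a \<Rightarrow> 'k) \<Rightarrow> 'k" +
  fixes \<eta> :: "'a \<Rightarrow> 'k::{alg_closed_field, field_char_0}"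
  assumes eta: "\<eta> \<in> lin_chars G"
begin

abbreviation eta' where "eta' \<equiv> restrict_char H \<eta>"

lemma eta_hom: "x \<in> carrier G \<Longrightarrow> y \<in> carrier G \<Longrightarrow> \<eta> (x \<otimes> y) = \<eta> x * \<eta> y"
  using eta by (simp add: lin_chars_def characters_def)

lemma eta_nz: "x \<in> carrier G \<Longrightarrow> \<eta> x \<noteq> 0"
  using eta by (simp add: lin_chars_def characters_def)

lemma eta'_C: "eta' \<in> C"
  unfolding characters_def restrict_char_def
proof (intro CollectI conjI ballI allI impI)
  fix x y assume "x \<in> H" "y \<in> H"
  thus "(if x \<otimes> y \<in> H then \<eta> (x \<otimes> y) else 0) = (if x \<in> H then \<eta> x else 0) * (if y \<in> H then \<eta> y else 0)"
    using subgroup.m_closed[OF subH] H_mem eta_hom by simp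
next
  fix x assume "x \<in> H" thus "(if x \<in> H then \<eta> x else 0) \<noteq> 0" using H_mem eta_nz by simp
qed simp

definition Pm :: "('a \<times> 'a \<Rightarrow> 'k) \<Rightarrow> ('a \<Rightarrow> 'k)" where
  "Pm z = (\<lambda>b. if b \<in> carrier G then \<Sum>a\<in>carrier G. z (a, b) * \<eta> a else 0)"

definition Qm :: "('a \<times> 'a \<Rightarrow> 'k) \<Rightarrow> ('a \<Rightarrow> 'k)" where
  "Qm z = (\<lambda>a. if a \<in> carrier G then \<Sum>b\<in>carrier G. z (a, b) * \<eta> b else 0)"

lemma eta_reindex:
  assumes c: "c \<in> carrier G"
  shows "(\<Sum>a\<in>carrier G. F (inv c \<otimes> a) * \<eta> a) = \<eta> c * (\<Sum>a\<in>carrier G. F a * \<eta> a)"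
proof -
  have "(\<Sum>a\<in>carrier G. F (inv c \<otimes> a) * \<eta> a) = (\<Sum>a\<in>carrier G. F (inv c \<otimes> (c \<otimes> a)) * \<eta> (c \<otimes> a))"
    using sum.reindex_bij_betw[OF bij_cmult'[OF c], of "\<lambda>a. F (inv c \<otimes> a) * \<eta> a"] by simp
  also have "\<dots> = (\<Sum>a\<in>carrier G. \<eta> c * (F a * \<eta> a))"
    using c by (intro sum.cong) (simp_all add: m_assoc[symmetric] eta_hom)
  finally show ?thesis by (simp add: sum_distrib_left)
qed

lemma P_tmult: "Pm (tmult G z w) = conv G (Pm z) (Pm w)"
proof (rule ext)
  fix b show "Pm (tmult G z w) b = conv G (Pm z) (Pm w) b"
  proof (cases "b \<in> carrier G")
    case False thus ?thesis by (simp add: Pm_def conv_def)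
  next
    case b: True
    let ?S = "carrier G"
    have "Pm (tmult G z w) b = (\<Sum>a\<in>?S. (\<Sum>c\<in>?S. \<Sum>d\<in>?S. z (c, d) * w (inv c \<otimes> a, inv d \<otimes> b)) * \<eta> a)"
      using b by (simp add: Pm_def tmult_def sum.cartesian_product)
    also have "\<dots> = (\<Sum>a\<in>?S. \<Sum>c\<in>?S. \<Sum>d\<in>?S. z (c, d) * (w (inv c \<otimes> a, inv d \<otimes> b) * \<eta> a))"
      by (simp add: sum_distrib_right mult.assoc)
    also have "\<dots> = (\<Sum>c\<in>?S. \<Sum>a\<in>?S. \<Sum>d\<in>?S. z (c, d) * (w (inv c \<otimes> a, inv d \<otimes> b) * \<eta> a))"
      by (rule sum.swap)
    also have "\<dots> = (\<Sum>c\<in>?S. \<Sum>d\<in>?S. \<Sum>a\<in>?S. z (c, d) * (w (inv c \<otimes> a, inv d \<otimes> b) * \<eta> a))"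
      by (rule sum.cong[OF refl], rule sum.swap)
    also have "\<dots> = (\<Sum>c\<in>?S. \<Sum>d\<in>?S. z (c, d) * (\<eta> c * Pm w (inv d \<otimes> b)))"
    proof (intro sum.cong refl)
      fix c d assume c: "c \<in> ?S" and d: "d \<in> ?S"
      have "(\<Sum>a\<in>?S. z (c, d) * (w (inv c \<otimes> a, inv d \<otimes> b) * \<eta> a))
          = z (c, d) * (\<Sum>a\<in>?S. w (inv c \<otimes> a, inv d \<otimes> b) * \<eta> a)" by (simp add: sum_distrib_left)
      also have "\<dots> = z (c, d) * (\<eta> c * (\<Sum>a\<in>?S. w (a, inv d \<otimes> b) * \<eta> a))"
        using eta_reindex[OF c, of "\<lambda>a. w (a, inv d \<otimes> b)"] by simp
      also have "\<dots> = z (c, d) * (\<eta> c * Pm w (inv d \<otimes> b))" using b d by (simp add: Pm_def)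
      finally show "(\<Sum>a\<in>?S. z (c, d) * (w (inv c \<otimes> a, inv d \<otimes> b) * \<eta> a)) = z (c, d) * (\<eta> c * Pm w (inv d \<otimes> b))" .
    qed
    also have "\<dots> = (\<Sum>d\<in>?S. \<Sum>c\<in>?S. z (c, d) * (\<eta> c * Pm w (inv d \<otimes> b)))"
      by (rule sum.swap)
    also have "\<dots> = (\<Sum>d\<in>?S. Pm z d * Pm w (inv d \<otimes> b))"
      by (intro sum.cong refl) (simp add: Pm_def sum_distrib_right mult.assoc)
    also have "\<dots> = conv G (Pm z) (Pm w) b" using b by (simp add: conv_def)
    finally show ?thesis .
  qed
qed

lemma Q_tmult: "Qm (tmult G z w) = conv G (Qm z) (Qm w)"
proof (rule ext)
  fix b show "Qm (tmult G z w) b = conv G (Qm z) (Qm w) b"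
  proof (cases "b \<in> carrier G")
    case False thus ?thesis by (simp add: Qm_def conv_def)
  next
    case b: True
    let ?S = "carrier G"
    have "Qm (tmult G z w) b = (\<Sum>a\<in>?S. (\<Sum>c\<in>?S. \<Sum>d\<in>?S. z (c, d) * w (inv c \<otimes> b, inv d \<otimes> a)) * \<eta> a)"
      using b by (simp add: Qm_def tmult_def sum.cartesian_product)
    also have "\<dots> = (\<Sum>a\<in>?S. \<Sum>c\<in>?S. \<Sum>d\<in>?S. z (c, d) * (w (inv c \<otimes> b, inv d \<otimes> a) * \<eta> a))"
      by (simp add: sum_distrib_right mult.assoc)
    also have "\<dots> = (\<Sum>c\<in>?S. \<Sum>a\<in>?S. \<Sum>d\<in>?S. z (c, d) * (w (inv c \<otimes> b, inv d \<otimes> a) * \<eta> a))"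
      by (rule sum.swap)
    also have "\<dots> = (\<Sum>c\<in>?S. \<Sum>d\<in>?S. \<Sum>a\<in>?S. z (c, d) * (w (inv c \<otimes> b, inv d \<otimes> a) * \<eta> a))"
      by (rule sum.cong[OF refl], rule sum.swap)
    also have "\<dots> = (\<Sum>c\<in>?S. \<Sum>d\<in>?S. z (c, d) * (\<eta> d * Qm w (inv c \<otimes> b)))"
    proof (intro sum.cong refl)
      fix c d assume c: "c \<in> ?S" and d: "d \<in> ?S"
      have "(\<Sum>a\<in>?S. z (c, d) * (w (inv c \<otimes> b, inv d \<otimes> a) * \<eta> a))
          = z (c, d) * (\<Sum>a\<in>?S. w (inv c \<otimes> b, inv d \<otimes> a) * \<eta> a)" by (simp add: sum_distrib_left)
      also have "\<dots> = z (c, d) * (\<eta> d * (\<Sum>a\<in>?S. w (inv c \<otimes> b, a) * \<eta> a))"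
        using eta_reindex[OF d, of "\<lambda>a. w (inv c \<otimes> b, a)"] by simp
      also have "\<dots> = z (c, d) * (\<eta> d * Qm w (inv c \<otimes> b))" using b c by (simp add: Qm_def)
      finally show "(\<Sum>a\<in>?S. z (c, d) * (w (inv c \<otimes> b, inv d \<otimes> a) * \<eta> a)) = z (c, d) * (\<eta> d * Qm w (inv c \<otimes> b))" .
    qed
    also have "\<dots> = (\<Sum>c\<in>?S. Qm z c * Qm w (inv c \<otimes> b))"
      by (intro sum.cong refl) (simp add: Qm_def sum_distrib_right mult.assoc)
    also have "\<dots> = conv G (Qm z) (Qm w) b" using b by (simp add: conv_def)
    finally show ?thesis .
  qed
qed

lemma ev_e:
  assumes a: "\<alpha> \<in> C"
  shows "(\<Sum>x\<in>carrier G. idem G H \<alpha> x * \<eta> x) = (if \<alpha> = eta' then 1 else 0)"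
proof -
  have "(\<Sum>x\<in>carrier G. idem G H \<alpha> x * \<eta> x) = (\<Sum>x\<in>H. idem G H \<alpha> x * \<eta> x)"
    using fin Hc by (intro sum.mono_neutral_right) (auto simp: e_out)
  also have "\<dots> = (\<Sum>x\<in>H. char_mult H (char_inv H \<alpha>) eta' x) / nn"
    unfolding sum_divide_distrib
    by (intro sum.cong refl) (simp add: e_val a char_mult_def char_inv_def restrict_char_def)
  also have "\<dots> = (if \<alpha> = eta' then 1 else 0)"
    using sum_elems[OF mult_C[OF inv_C[OF a] eta'_C]] char_inv_mult_one_iff[OF a eta'_C] nn_nz by simp
  finally show ?thesis .
qed

lemma T_nested: "T c p = (\<Sum>\<alpha>\<in>C. \<Sum>\<beta>\<in>C. c \<alpha> \<beta> * (idem G H \<alpha> (fst p) * idem G H \<beta> (snd p)))"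
  unfolding T_def by (simp add: sum.cartesian_product tensor_def case_prod_beta)

lemma P_T: "Pm (T c) = D (\<lambda>\<beta>. c eta' \<beta>)"
proof (rule ext)
  fix b show "Pm (T c) b = D (\<lambda>\<beta>. c eta' \<beta>) b"
  proof (cases "b \<in> carrier G")
    case False thus ?thesis using D_supp by (simp add: Pm_def supp_in_def)
  next
    case b: True
    have "Pm (T c) b = (\<Sum>x\<in>carrier G. (\<Sum>\<alpha>\<in>C. \<Sum>\<beta>\<in>C. c \<alpha> \<beta> * (idem G H \<alpha> x * idem G H \<beta> b)) * \<eta> x)"
      using b by (simp add: Pm_def T_nested)
    also have "\<dots> = (\<Sum>x\<in>carrier G. \<Sum>\<alpha>\<in>C. \<Sum>\<beta>\<in>C. (c \<alpha> \<beta> * idem G H \<beta> b) * (idem G H \<alpha> x * \<eta> x))"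
      by (simp add: sum_distrib_left sum_distrib_right mult_ac)
    also have "\<dots> = (\<Sum>\<alpha>\<in>C. \<Sum>x\<in>carrier G. \<Sum>\<beta>\<in>C. (c \<alpha> \<beta> * idem G H \<beta> b) * (idem G H \<alpha> x * \<eta> x))"
      by (rule sum.swap)
    also have "\<dots> = (\<Sum>\<alpha>\<in>C. \<Sum>\<beta>\<in>C. \<Sum>x\<in>carrier G. (c \<alpha> \<beta> * idem G H \<beta> b) * (idem G H \<alpha> x * \<eta> x))"
      by (rule sum.cong[OF refl], rule sum.swap)
    also have "\<dots> = (\<Sum>\<alpha>\<in>C. \<Sum>\<beta>\<in>C. (c \<alpha> \<beta> * idem G H \<beta> b) * (\<Sum>x\<in>carrier G. idem G H \<alpha> x * \<eta> x))"
      by (simp add: sum_distrib_left)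
    also have "\<dots> = (\<Sum>\<alpha>\<in>C. if \<alpha> = eta' then (\<Sum>\<beta>\<in>C. c eta' \<beta> * idem G H \<beta> b) else 0)"
      by (rule sum.cong[OF refl]) (simp add: ev_e)
    also have "\<dots> = D (\<lambda>\<beta>. c eta' \<beta>) b" using eta'_C C_fin by (simp add: sum.delta' D_def)
    finally show ?thesis .
  qed
qed

lemma Q_T: "Qm (T c) = D (\<lambda>\<alpha>. c \<alpha> eta')"
proof (rule ext)
  fix b show "Qm (T c) b = D (\<lambda>\<alpha>. c \<alpha> eta') b"
  proof (cases "b \<in> carrier G")
    case False thus ?thesis using D_supp by (simp add: Qm_def supp_in_def)
  next
    case b: True
    have "Qm (T c) b = (\<Sum>x\<in>carrier G. (\<Sum>\<alpha>\<in>C. \<Sum>\<beta>\<in>C. c \<alpha> \<beta> * (idem G H \<alpha> b * idem G H \<beta> x)) * \<eta> x)"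
      using b by (simp add: Qm_def T_nested)
    also have "\<dots> = (\<Sum>x\<in>carrier G. \<Sum>\<alpha>\<in>C. \<Sum>\<beta>\<in>C. (c \<alpha> \<beta> * idem G H \<alpha> b) * (idem G H \<beta> x * \<eta> x))"
      by (simp add: sum_distrib_left sum_distrib_right mult_ac)
    also have "\<dots> = (\<Sum>\<alpha>\<in>C. \<Sum>x\<in>carrier G. \<Sum>\<beta>\<in>C. (c \<alpha> \<beta> * idem G H \<alpha> b) * (idem G H \<beta> x * \<eta> x))"
      by (rule sum.swap)
    also have "\<dots> = (\<Sum>\<alpha>\<in>C. \<Sum>\<beta>\<in>C. \<Sum>x\<in>carrier G. (c \<alpha> \<beta> * idem G H \<alpha> b) * (idem G H \<beta> x * \<eta> x))"
      by (rule sum.cong[OF refl], rule sum.swap)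
    also have "\<dots> = (\<Sum>\<alpha>\<in>C. \<Sum>\<beta>\<in>C. (c \<alpha> \<beta> * idem G H \<alpha> b) * (\<Sum>x\<in>carrier G. idem G H \<beta> x * \<eta> x))"
      by (simp add: sum_distrib_left)
    also have "\<dots> = (\<Sum>\<alpha>\<in>C. \<Sum>\<beta>\<in>C. if \<beta> = eta' then c \<alpha> eta' * idem G H \<alpha> b else 0)"
      by (intro sum.cong refl) (simp add: ev_e)
    also have "\<dots> = (\<Sum>\<alpha>\<in>C. c \<alpha> eta' * idem G H \<alpha> b)"
      using eta'_C C_fin by (simp add: sum.delta')
    also have "\<dots> = D (\<lambda>\<alpha>. c \<alpha> eta') b" by (simp add: D_def)
    finally show ?thesis .
  qed
qed

lemma P_X:
  assumes x: "x \<in> carrier G"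
  shows "Pm (tensor (basis_el x) (basis_el x)) = (\<lambda>b. \<eta> x * basis_el x b)"
proof (rule ext)
  fix b
  have "(\<Sum>a\<in>carrier G. tensor (basis_el x) (basis_el x) (a, b) * \<eta> a)
      = (\<Sum>a\<in>carrier G. if a = x then basis_el x b * \<eta> x else 0)"
    by (rule sum.cong) (auto simp: tensor_def basis_el_def)
  also have "\<dots> = basis_el x b * \<eta> x" using fin x by (simp add: sum.delta')
  finally show "Pm (tensor (basis_el x) (basis_el x)) b = \<eta> x * basis_el x b"
    using x by (auto simp: Pm_def basis_el_def)
qed

lemma Q_X:
  assumes x: "x \<in> carrier G"
  shows "Qm (tensor (basis_el x) (basis_el x)) = (\<lambda>b. \<eta> x * basis_el x b)"
proof (rule ext)
  fix b
  have "(\<Sum>a\<in>carrier G. tensor (basis_el x) (basis_el x) (b, a) * \<eta> a)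
      = (\<Sum>a\<in>carrier G. if a = x then basis_el x b * \<eta> x else 0)"
    by (rule sum.cong) (auto simp: tensor_def basis_el_def)
  also have "\<dots> = basis_el x b * \<eta> x" using fin x by (simp add: sum.delta')
  finally show "Qm (tensor (basis_el x) (basis_el x)) b = \<eta> x * basis_el x b"
    using x by (auto simp: Qm_def basis_el_def)
qed

end

context twist_eta
begin

definition L where "L = D (\<lambda>\<beta>. inverse (\<omega> eta' \<beta>))"
definition R where "R = D (\<lambda>\<beta>. \<omega> eta' \<beta>)"
definition L' where "L' = D (\<lambda>\<alpha>. inverse (\<omega> \<alpha> eta'))"
definition R' where "R' = D (\<lambda>\<alpha>. \<omega> \<alpha> eta')"

lemma comultJ_eq: "x \<in> carrier G \<Longrightarrow> comultJ G H \<omega> (basis_el x)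
   = tmult G (tmult G (T (\<lambda>\<alpha> \<beta>. inverse (\<omega> \<alpha> \<beta>))) (tensor (basis_el x) (basis_el x))) (T \<omega>)"
  by (simp add: comultJ_def tinv_J[unfolded twistJ_T] twistJ_T comult_basis)

lemma PZ:
  assumes x: "x \<in> carrier G"
  shows "Pm (comultJ G H \<omega> (basis_el x)) = (\<lambda>g. \<eta> x * conv G (conv G L (basis_el x)) R g)"
  using x by (simp add: comultJ_eq P_tmult P_T P_X conv_smult_right conv_smult_left L_def R_def)

lemma QZ:
  assumes x: "x \<in> carrier G"
  shows "Qm (comultJ G H \<omega> (basis_el x)) = (\<lambda>g. \<eta> x * conv G (conv G L' (basis_el x)) R' g)"
  using x by (simp add: comultJ_eq Q_tmult Q_T Q_X conv_smult_right conv_smult_left L'_def R'_def)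

lemma dual_P:
  "dual_mult G H \<omega> \<eta> f x = (if x \<in> carrier G then \<Sum>b\<in>carrier G. Pm (comultJ G H \<omega> (basis_el x)) b * f b else 0)"
proof (cases "x \<in> carrier G")
  case False thus ?thesis by (simp add: dual_mult_def)
next
  case True
  let ?Z = "comultJ G H \<omega> (basis_el x)"
  have "dual_mult G H \<omega> \<eta> f x = (\<Sum>a\<in>carrier G. \<Sum>b\<in>carrier G. ?Z (a, b) * \<eta> a * f b)"
    using True by (simp add: dual_mult_def sum.cartesian_product)
  also have "\<dots> = (\<Sum>b\<in>carrier G. \<Sum>a\<in>carrier G. ?Z (a, b) * \<eta> a * f b)" by (rule sum.swap)
  also have "\<dots> = (\<Sum>b\<in>carrier G. Pm ?Z b * f b)"
    by (rule sum.cong[OF refl]) (simp add: Pm_def sum_distrib_right)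
  finally show ?thesis using True by simp
qed

lemma dual_Q:
  "dual_mult G H \<omega> f \<eta> x = (if x \<in> carrier G then \<Sum>a\<in>carrier G. Qm (comultJ G H \<omega> (basis_el x)) a * f a else 0)"
proof (cases "x \<in> carrier G")
  case False thus ?thesis by (simp add: dual_mult_def)
next
  case True
  let ?Z = "comultJ G H \<omega> (basis_el x)"
  have "dual_mult G H \<omega> f \<eta> x = (\<Sum>a\<in>carrier G. \<Sum>b\<in>carrier G. ?Z (a, b) * f a * \<eta> b)"
    using True by (simp add: dual_mult_def sum.cartesian_product)
  also have "\<dots> = (\<Sum>a\<in>carrier G. Qm ?Z a * f a)"
    by (rule sum.cong[OF refl]) (simp add: Qm_def sum_distrib_right sum_distrib_left mult_ac)
  finally show ?thesis using True by simp
qed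

lemma center_iff1:
  "in_dual_center G H \<omega> \<eta> \<longleftrightarrow> (\<forall>x\<in>carrier G. Pm (comultJ G H \<omega> (basis_el x)) = Qm (comultJ G H \<omega> (basis_el x)))"
proof
  assume c: "in_dual_center G H \<omega> \<eta>"
  show "\<forall>x\<in>carrier G. Pm (comultJ G H \<omega> (basis_el x)) = Qm (comultJ G H \<omega> (basis_el x))"
  proof (intro ballI ext)
    fix x b assume x: "x \<in> carrier G"
    let ?Z = "comultJ G H \<omega> (basis_el x)"
    show "Pm ?Z b = Qm ?Z b"
    proof (cases "b \<in> carrier G")
      case False thus ?thesis by (simp add: Pm_def Qm_def)
    next
      case b: True
      have e: "dual_mult G H \<omega> \<eta> (basis_el b) x = dual_mult G H \<omega> (basis_el b) \<eta> x"
        using c by (simp add: in_dual_center_def)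
      have "(\<Sum>b'\<in>carrier G. Pm ?Z b' * basis_el b b') = Pm ?Z b"
        using fin b by (simp add: basis_el_def sum.delta' if_distrib cong: if_cong)
      moreover have "(\<Sum>b'\<in>carrier G. Qm ?Z b' * basis_el b b') = Qm ?Z b"
        using fin b by (simp add: basis_el_def sum.delta' if_distrib cong: if_cong)
      ultimately show ?thesis using e x by (simp add: dual_P dual_Q)
    qed
  qed
next
  assume h: "\<forall>x\<in>carrier G. Pm (comultJ G H \<omega> (basis_el x)) = Qm (comultJ G H \<omega> (basis_el x))"
  show "in_dual_center G H \<omega> \<eta>"
    unfolding in_dual_center_def
  proof (intro allI ext)
    fix f x show "dual_mult G H \<omega> \<eta> f x = dual_mult G H \<omega> f \<eta> x"
      using h by (simp add: dual_P dual_Q)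
  qed
qed

lemma center_iff2:
  "in_dual_center G H \<omega> \<eta> \<longleftrightarrow>
     (\<forall>x\<in>carrier G. conv G (conv G L (basis_el x)) R = conv G (conv G L' (basis_el x)) R')"
proof -
  have "(\<lambda>g. \<eta> x * A g) = (\<lambda>g. \<eta> x * B g) \<longleftrightarrow> A = B" if x: "x \<in> carrier G" for x and A B :: "'a \<Rightarrow> 'k"
  proof
    assume "(\<lambda>g. \<eta> x * A g) = (\<lambda>g. \<eta> x * B g)"
    thus "A = B" using eta_nz[OF x] by (metis (no_types) ext mult_left_cancel)
  qed simp
  thus ?thesis using center_iff1 PZ QZ by simp
qed

lemma regular_imp_center:
  assumes "omega_regular G H \<omega> eta'"
  shows "in_dual_center G H \<omega> \<eta>"
proof -
  have "\<forall>\<psi>\<in>C. \<omega> eta' \<psi> = \<omega> \<psi> eta'" using assms by (simp add: omega_regular_def)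
  hence "L = L'" "R = R'" unfolding L_def L'_def R_def R'_def by (auto intro!: D_cong)
  thus ?thesis using center_iff2 by simp
qed

end

lemma bichar_alg:
  fixes a b c d e f g h i :: "'k::field"
  assumes e1: "a * b = c * d" and e2: "e * f = g * a" and e3: "h * f = c * i" and nz: "a \<noteq> 0" "f \<noteq> 0"
  shows "b * e * i = h * d * g"
proof -
  have "b * e * i * (a * f) = (a * b) * (e * i * f)" by (simp add: mult_ac)
  also have "\<dots> = (c * d) * (e * i * f)" by (simp add: e1)
  also have "\<dots> = (c * i) * (d * e * f)" by (simp add: mult_ac)
  also have "\<dots> = (h * f) * (d * e * f)" by (simp add: e3)
  also have "\<dots> = (e * f) * (h * d * f)" by (simp add: mult_ac)
  also have "\<dots> = (g * a) * (h * d * f)" by (simp add: e2)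
  also have "\<dots> = h * d * g * (a * f)" by (simp add: mult_ac)
  finally show ?thesis using nz by simp
qed

context twist_eta
begin

definition lam where "lam \<beta> = \<omega> \<beta> eta' * inverse (\<omega> eta' \<beta>)"

definition u where "u = D lam"

lemma cocycle_eq:
  "\<alpha> \<in> C \<Longrightarrow> \<beta> \<in> C \<Longrightarrow> \<gamma> \<in> C \<Longrightarrow>
     \<omega> \<alpha> \<beta> * \<omega> (char_mult H \<alpha> \<beta>) \<gamma> = \<omega> \<alpha> (char_mult H \<beta> \<gamma>) * \<omega> \<beta> \<gamma>"
  using coc by (simp add: two_cocycle_def)

lemma cocycle_norm: "\<alpha> \<in> C \<Longrightarrow> \<omega> (char_one H) \<alpha> = 1 \<and> \<omega> \<alpha> (char_one H) = 1"
  using coc by (simp add: two_cocycle_def)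

lemma lam_mult:
  assumes b: "\<beta> \<in> C" and g: "\<gamma> \<in> C"
  shows "lam (char_mult H \<beta> \<gamma>) = lam \<beta> * lam \<gamma>"
proof -
  let ?e = eta'
  have eC: "?e \<in> C" by (rule eta'_C)
  have 1: "\<omega> \<beta> \<gamma> * \<omega> (char_mult H \<beta> \<gamma>) ?e = \<omega> \<beta> (char_mult H ?e \<gamma>) * \<omega> \<gamma> ?e"
    using cocycle_eq[OF b g eC] char_mult_comm[of H \<gamma> ?e] by simp
  have 2: "\<omega> ?e \<beta> * \<omega> (char_mult H ?e \<beta>) \<gamma> = \<omega> ?e (char_mult H \<beta> \<gamma>) * \<omega> \<beta> \<gamma>"
    using cocycle_eq[OF eC b g] .
  have 3: "\<omega> \<beta> ?e * \<omega> (char_mult H ?e \<beta>) \<gamma> = \<omega> \<beta> (char_mult H ?e \<gamma>) * \<omega> ?e \<gamma>"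
    using cocycle_eq[OF b eC g] char_mult_comm[of H \<beta> ?e] by simp
  have bg: "char_mult H \<beta> \<gamma> \<in> C" by (rule mult_C[OF b g])
  have eb: "char_mult H ?e \<beta> \<in> C" by (rule mult_C[OF eC b])
  have key: "\<omega> (char_mult H \<beta> \<gamma>) ?e * \<omega> ?e \<beta> * \<omega> ?e \<gamma> = \<omega> \<beta> ?e * \<omega> \<gamma> ?e * \<omega> ?e (char_mult H \<beta> \<gamma>)"
    by (rule bichar_alg[OF 1 2 3 omega_nz[OF b g] omega_nz[OF eb g]])
  have n1: "\<omega> ?e \<beta> \<noteq> 0" "\<omega> ?e \<gamma> \<noteq> 0" "\<omega> ?e (char_mult H \<beta> \<gamma>) \<noteq> 0"
    using omega_nz eC b g bg by auto
  show ?thesis unfolding lam_def using key n1 by (simp add: field_simps)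
qed

lemma lam_one: "lam (char_one H) = 1"
  using cocycle_norm[OF eta'_C] by (simp add: lam_def)

lemma inv_bij_H: "bij_betw (\<lambda>h. inv h) H H"
proof (rule bij_betw_byWitness[where f'="\<lambda>h. inv h"])
  show "\<forall>a\<in>H. inv (inv a) = a" using H_mem by simp
  show "\<forall>a\<in>H. inv (inv a) = a" using H_mem by simp
  show "(\<lambda>h. inv h) ` H \<subseteq> H" using subgroup.m_inv_closed[OF subH] by blast
  show "(\<lambda>h. inv h) ` H \<subseteq> H" using subgroup.m_inv_closed[OF subH] by blast
qed

definition s where "s h = (\<Sum>\<gamma>\<in>C. lam \<gamma> * \<gamma> (inv h))"

lemma u_val: "h \<in> H \<Longrightarrow> u h = s h / nn"
  unfolding u_def D_def s_def
  by (simp add: sum_divide_distrib e_val char_inv_val[OF subH] idem_def)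

lemma s_eig:
  assumes h: "h \<in> H" and b: "\<beta> \<in> C"
  shows "s h = lam \<beta> * \<beta> (inv h) * s h"
proof -
  have ih: "inv h \<in> H" by (rule subgroup.m_inv_closed[OF subH h])
  have "s h = (\<Sum>\<gamma>\<in>C. lam (char_mult H \<beta> \<gamma>) * char_mult H \<beta> \<gamma> (inv h))"
    unfolding s_def by (rule C_reindex[OF b])
  also have "\<dots> = (\<Sum>\<gamma>\<in>C. lam \<beta> * \<beta> (inv h) * (lam \<gamma> * \<gamma> (inv h)))"
  proof (rule sum.cong[OF refl])
    fix \<gamma> assume g: "\<gamma> \<in> C"
    have cm: "char_mult H \<beta> \<gamma> (inv h) = \<beta> (inv h) * \<gamma> (inv h)" using ih by (simp add: char_mult_def)
    show "lam (char_mult H \<beta> \<gamma>) * char_mult H \<beta> \<gamma> (inv h) = lam \<beta> * \<beta> (inv h) * (lam \<gamma> * \<gamma> (inv h))"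
      unfolding cm lam_mult[OF b g] by (simp add: mult_ac)
  qed
  also have "\<dots> = lam \<beta> * \<beta> (inv h) * s h" by (simp add: s_def sum_distrib_left)
  finally show ?thesis .
qed

lemma s_nz_lam:
  assumes h: "h \<in> H" and sh: "s h \<noteq> 0" and b: "\<beta> \<in> C"
  shows "lam \<beta> = \<beta> h"
proof -
  have "lam \<beta> * \<beta> (inv h) = 1" using s_eig[OF h b] sh by simp
  moreover have "\<beta> (inv h) = inverse (\<beta> h)" by (rule char_inv_val[OF subH b h])
  moreover have "\<beta> h \<noteq> 0" by (rule char_nz[OF b h])
  ultimately show ?thesis by (simp add: field_simps)
qed

lemma s_exists: "\<exists>h\<in>H. s h \<noteq> 0"
proof (rule ccontr)
  assume "\<not> (\<exists>h\<in>H. s h \<noteq> 0)"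
  hence z: "(\<Sum>h\<in>H. s h) = 0" by simp
  have "(\<Sum>h\<in>H. s h) = (\<Sum>\<gamma>\<in>C. lam \<gamma> * (\<Sum>h\<in>H. \<gamma> (inv h)))"
    unfolding s_def by (subst sum.swap) (simp add: sum_distrib_left)
  also have "\<dots> = (\<Sum>\<gamma>\<in>C. lam \<gamma> * (\<Sum>h\<in>H. \<gamma> h))"
  proof (intro sum.cong refl)
    fix \<gamma> show "lam \<gamma> * (\<Sum>h\<in>H. \<gamma> (inv h)) = lam \<gamma> * (\<Sum>h\<in>H. \<gamma> h)"
      using sum.reindex_bij_betw[OF inv_bij_H, of \<gamma>] by simp
  qed
  also have "\<dots> = (\<Sum>\<gamma>\<in>C. if \<gamma> = char_one H then lam \<gamma> * nn else 0)"
    by (intro sum.cong refl) (simp add: sum_elems)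
  also have "\<dots> = nn" using C_fin one_C lam_one by (simp add: sum.delta')
  finally show False using z nn_nz by simp
qed

lemma chars_separate:
  assumes h: "h \<in> H" and y: "y \<in> H" and e: "\<forall>\<beta>\<in>C. \<beta> y = \<beta> h"
  shows "y = h"
proof -
  have ihy: "inv h \<otimes> y \<in> H" by (rule subgroup.m_closed[OF subH subgroup.m_inv_closed[OF subH h] y])
  have "(\<Sum>\<beta>\<in>C. \<beta> (inv h \<otimes> y)) = (\<Sum>\<beta>\<in>C. (1::'k))"
  proof (rule sum.cong[OF refl])
    fix \<beta> assume b: "\<beta> \<in> C"
    have "\<beta> (inv h \<otimes> y) = \<beta> (inv h) * \<beta> y"
      by (rule char_mult_hom[OF b subgroup.m_inv_closed[OF subH h] y])
    also have "\<dots> = inverse (\<beta> h) * \<beta> h" using e b char_inv_val[OF subH b h] by simp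
    also have "\<dots> = 1" using char_nz[OF b h] by simp
    finally show "\<beta> (inv h \<otimes> y) = 1" .
  qed
  also have "\<dots> = nn" using C_card by simp
  finally have "(\<Sum>\<beta>\<in>C. \<beta> (inv h \<otimes> y)) = nn" .
  hence "inv h \<otimes> y = \<one>" using sum_chars[OF ihy] nn_nz by (auto split: if_splits)
  thus ?thesis using H_mem[OF h] H_mem[OF y] by (metis inv_equality inv_inv m_closed inv_closed)
qed

lemma u_class:
  assumes c: "in_dual_center G H \<omega> \<eta>" and x: "x \<in> carrier G" and y: "y \<in> carrier G"
  shows "u (x \<otimes> y \<otimes> inv x) = u y"
proof -
  let ?d = "basis_el x :: 'a \<Rightarrow> 'k"
  have dsupp: "supp_in (carrier G) ?d" using x by (auto simp: supp_in_def basis_el_def)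
  have A: "conv G (conv G L ?d) R = conv G (conv G L' ?d) R'" using c x center_iff2 by blast
  have RL: "conv G R L = basis_el \<one>"
  proof -
    have "D (\<lambda>\<alpha>. \<omega> eta' \<alpha> * inverse (\<omega> eta' \<alpha>)) = D (\<lambda>_. 1)"
      by (rule D_cong) (simp add: omega_nz[OF eta'_C])
    thus ?thesis unfolding R_def L_def D_mult D_one .
  qed
  have R'L': "conv G R' L' = basis_el \<one>"
  proof -
    have "D (\<lambda>\<alpha>. \<omega> \<alpha> eta' * inverse (\<omega> \<alpha> eta')) = D (\<lambda>_. 1)"
      by (rule D_cong) (simp add: omega_nz[OF _ eta'_C])
    thus ?thesis unfolding R'_def L'_def D_mult D_one .
  qed
  have R'L: "conv G R' L = u"
    unfolding R'_def L_def u_def D_mult lam_def by simp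
  have "conv G R' (conv G (conv G (conv G L ?d) R) L) = conv G (conv G R' L) (conv G ?d (conv G R L))"
    by (simp only: conv_assoc)
  also have "\<dots> = conv G u ?d" using RL R'L conv_one_right[OF fin dsupp] by simp
  finally have l: "conv G R' (conv G (conv G (conv G L ?d) R) L) = conv G u ?d" .
  have "conv G R' (conv G (conv G (conv G L' ?d) R') L) = conv G (conv G R' L') (conv G ?d (conv G R' L))"
    by (simp only: conv_assoc)
  also have "\<dots> = conv G ?d u" using R'L' R'L conv_one_left[OF fin conv_supp] by simp
  finally have r: "conv G R' (conv G (conv G (conv G L' ?d) R') L) = conv G ?d u" .
  have eq: "conv G u ?d = conv G ?d u" using l r A by simp
  have xy: "x \<otimes> y \<in> carrier G" using x y by simp
  have "u (x \<otimes> y \<otimes> inv x) = conv G u ?d (x \<otimes> y)" using xy by (simp add: conv_delta_right[OF fin x])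
  also have "\<dots> = conv G ?d u (x \<otimes> y)" using eq by simp
  also have "\<dots> = u y" using xy x y by (simp add: conv_delta_left[OF fin x] m_assoc[symmetric])
  finally show ?thesis .
qed

lemma center_imp_regular:
  assumes c: "in_dual_center G H \<omega> \<eta>" and Z: "center_grp G = {\<one>}"
  shows "omega_regular G H \<omega> eta'"
proof -
  obtain h0 where h0: "h0 \<in> H" "s h0 \<noteq> 0" using s_exists by blast
  have lam0: "\<forall>\<beta>\<in>C. lam \<beta> = \<beta> h0" using s_nz_lam[OF h0] by blast
  have h0c: "h0 \<in> carrier G" by (rule H_mem[OF h0(1)])
  have "h0 \<in> center_grp G"
    unfolding center_grp_def
  proof (intro CollectI conjI ballI h0c)
    fix x assume x: "x \<in> carrier G"
    let ?y = "x \<otimes> h0 \<otimes> inv x"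
    have "u ?y = u h0" by (rule u_class[OF c x h0c])
    also have "u h0 \<noteq> 0" using u_val[OF h0(1)] h0(2) nn_nz by simp
    finally have uy: "u ?y \<noteq> 0" .
    have yH: "?y \<in> H"
    proof (rule ccontr)
      assume "?y \<notin> H" hence "u ?y = 0" unfolding u_def by (rule D_out)
      thus False using uy by simp
    qed
    have sy: "s ?y \<noteq> 0" using uy u_val[OF yH] by auto
    have "\<forall>\<beta>\<in>C. \<beta> ?y = \<beta> h0"
    proof
      fix \<beta> assume b: "\<beta> \<in> C"
      show "\<beta> ?y = \<beta> h0" using s_nz_lam[OF yH sy b] lam0 b by simp
    qed
    hence "?y = h0" by (rule chars_separate[OF h0(1) yH])
    hence "x \<otimes> h0 \<otimes> inv x \<otimes> x = h0 \<otimes> x" by simp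
    thus "h0 \<otimes> x = x \<otimes> h0" using x h0c by (simp add: m_assoc)
  qed
  hence "h0 = \<one>" using Z by blast
  have "\<forall>\<beta>\<in>C. lam \<beta> = 1"
  proof
    fix \<beta> assume b: "\<beta> \<in> C"
    have "\<beta> \<one> = 1" by (rule char_one_val[OF subH b])
    thus "lam \<beta> = 1" using lam0 b \<open>h0 = \<one>\<close> by simp
  qed
  show ?thesis unfolding omega_regular_def
  proof
    fix \<psi> assume p: "\<psi> \<in> C"
    have "\<omega> \<psi> eta' * inverse (\<omega> eta' \<psi>) = 1" using \<open>\<forall>\<beta>\<in>C. lam \<beta> = 1\<close> p by (simp add: lam_def)
    moreover have "\<omega> eta' \<psi> \<noteq> 0" by (rule omega_nz[OF eta'_C p])
    ultimately show "\<omega> eta' \<psi> = \<omega> \<psi> eta'" by (metis inverse_unique inverse_inverse_eq)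
  qed
qed

end

theorem theorem3p1:
  fixes G :: "('g, 'b) monoid_scheme"
    and H :: "'g set"
    and \<omega> :: "('g \<Rightarrow> 'k::{alg_closed_field, field_char_0}) \<Rightarrow> ('g \<Rightarrow> 'k) \<Rightarrow> 'k"
    and \<eta> :: "'g \<Rightarrow> 'k"
  assumes "group G"
    and "finite (carrier G)"
    and "center_grp G = {\<one>\<^bsub>G\<^esub>}"
    and "subgroup H G"
    and "\<forall>x\<in>H. \<forall>y\<in>H. x \<otimes>\<^bsub>G\<^esub> y = y \<otimes>\<^bsub>G\<^esub> x"
    and "two_cocycle G H \<omega>"
    and "\<eta> \<in> lin_chars G"
  shows "(in_dual_center G H \<omega> \<eta> \<longleftrightarrow> omega_regular G H \<omega> (restrict_char H \<eta>))
       \<and> (non_degenerate G H \<omega> \<longrightarrow>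
            (in_dual_center G H \<omega> \<eta> \<longleftrightarrow> restrict_char H \<eta> = char_one H))"
proof -
  interpret te: twist_eta G H \<omega> \<eta>
    unfolding twist_eta_def twist_setting_def twist_setting_axioms_def twist_eta_axioms_def
    using assms by auto
  have eq1: "in_dual_center G H \<omega> \<eta> \<longleftrightarrow> omega_regular G H \<omega> (restrict_char H \<eta>)"
    using te.regular_imp_center te.center_imp_regular[OF _ assms(3)] by blast
  have eq2: "in_dual_center G H \<omega> \<eta> \<longleftrightarrow> restrict_char H \<eta> = char_one H"
    if nd: "non_degenerate G H \<omega>"
  proof
    assume "in_dual_center G H \<omega> \<eta>"
    hence "omega_regular G H \<omega> (restrict_char H \<eta>)" using eq1 by simp
    thus "restrict_char H \<eta> = char_one H" using nd te.eta'_C by (simp add: non_degenerate_def)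
  next
    assume e: "restrict_char H \<eta> = char_one H"
    have "omega_regular G H \<omega> (char_one H)"
      unfolding omega_regular_def using te.cocycle_norm by simp
    thus "in_dual_center G H \<omega> \<eta>" using eq1 e by simp
  qed
  show ?thesis using eq1 eq2 by blast
qed

end
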